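(* Let $C,D,E$ be finite category presentations. If $\mathcal P:[\![C]\!]\nrightarrow[\![D]\!]$ and $\mathcal Q:[\![D]\!]\nrightarrow[\![E]\!]$ are profunctors with $\mathcal P\cong[\![P]\!]$ and $\mathcal Q\cong[\![Q]\!]$ for finite curryable profunctor presentations $P:C\nrightarrow D$ and $Q:D\nrightarrow E$, then there is a finite curryable profunctor presentation $R:C\nrightarrow E$ with $\mathcal P\odot\mathcal Q\cong[\![R]\!]$.
   Context: Category presentations $C$: sorts, function symbols $f:c\to c'$, equations $C_E$ between parallel paths (composable lists of function symbols, possibly empty); finite if all these sets are finite. Provable equality $\approx_C$: smallest equivalence relation on paths containing $C_E$ and closed under concatenation with composable function symbols; $[\![C]\!]$: sorts as objects, $\approx_C$-classes of paths as morphisms. Profunctors $\mathcal P:\mathcal C\nrightarrow\mathcal D$: functors $\mathcal C^{op}\times\mathcal D\to\mathbf{Set}$ (equivalently categories over $\mathbf 2=\{0\to1\}$ with fibres $\mathcal C,\mathcal D$); isomorphisms are natural isomorphisms. Composite: $(\mathcal P\odot\mathcal Q)(c,e)=\int^{d}\mathcal P(c,d)\times\mathcal Q(d,e)$, the quotient of $\coprod_d\mathcal P(c,d)\times\mathcal Q(d,e)$ by the equivalence relation generated by $(p,\mathcal Q(g,1)q')\sim(\mathcal P(1,g)p,q')$ for $g:d\to d'$. Uncurried presentations $P:C\nrightarrow D$: a set $\mathrm{Fun}(P)$ of symbols $x:c\to d$ ($c$ a $C$-sort, $d$ a $D$-sort) and a set $P_E$ of equations between cross-paths (paths from a $C$-sort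 to a $D$-sort) of the category presentation $|P|$ with sorts $\mathrm{Sort}(C)+\mathrm{Sort}(D)$, symbols $\mathrm{Fun}(C)+\mathrm{Fun}(P)+\mathrm{Fun}(D)$ and equations $C_E+P_E+D_E$; $\approx_P$ is provable equality of $|P|$ restricted to cross-paths; $[\![P]\!]=[\![|P|]\!]$ with $C$-sorts over $0$ and $D$-sorts over $1$. Finite if $\mathrm{Fun}(P)$ and $P_E$ are finite. A short left cross-path is $f.p$ with $f\in\mathrm{Fun}(C)$, $p\in\mathrm{Fun}(P)$; a right cross-path is $p.g$ with $p\in\mathrm{Fun}(P)$, $g$ a $D$-path. For a $C$-sort $c$, $P^c$ is the $D$-instance presentation whose generators are the symbols $p:c\to d$ of $P$ and whose equations are those of $P_E$ with source $c$ (its provable equality being the smallest equivalence relation on its terms $p.g$ containing these equations, closed under right concatenation with $D$-function symbols, and identifying $t.g,t.g'$ for equations $g=g'$ of $D_E$). $P$ is nongenerative if every short left cross-path is $\approx_P$-equal to a right cross-path, conservative if right cross-paths $t,t'$ from $c$ with $t\approx_P t'$ are provably equal in $P^c$, and curryable if it is both nongenerative and conservative. *)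

theory Defs
  imports Main
begin

type_synonym ('s,'f) path = "'s \<times> 'f list"
  \<comment> \<open>a path is its source sort together with a list of function symbols,
      composed in diagrammatic order (f.g = first f, then g)\<close>

record ('s,'f) catpres =
  Sorts :: "'s set"
  Funs :: "'f set"
  fsrc :: "'f \<Rightarrow> 's"
  ftgt :: "'f \<Rightarrow> 's"
  Eqs :: "(('s,'f) path \<times> ('s,'f) path) set"

fun is_chain :: "('s,'f,'z) catpres_scheme \<Rightarrow> 's \<Rightarrow> 'f list \<Rightarrow> 's \<Rightarrow> bool" where
  "is_chain C s [] t = (s = t \<and> s \<in> Sorts C)"
| "is_chain C s (f # fs) t =
     (s \<in> Sorts C \<and> f \<in> Funs C \<and> fsrc C f = s \<and> is_chain C (ftgt C f) fs t)"

definition is_path :: "('s,'f,'z) catpres_scheme \<Rightarrow> ('s,'f) path \<Rightarrow> 's \<Rightarrow> bool" where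
  "is_path C p t \<longleftrightarrow> is_chain C (fst p) (snd p) t"

definition path_tgt :: "('s,'f,'z) catpres_scheme \<Rightarrow> ('s,'f) path \<Rightarrow> 's" where
  "path_tgt C p = (if snd p = [] then fst p else ftgt C (last (snd p)))"

definition catpres_wf :: "('s,'f) catpres \<Rightarrow> bool" where
  "catpres_wf C \<longleftrightarrow>
     (\<forall>f\<in>Funs C. fsrc C f \<in> Sorts C \<and> ftgt C f \<in> Sorts C) \<and>
     (\<forall>(u,v)\<in>Eqs C. fst u = fst v \<and> (\<exists>t. is_path C u t \<and> is_path C v t))"

definition finite_catpres :: "('s,'f) catpres \<Rightarrow> bool" where
  "finite_catpres C \<longleftrightarrow> finite (Sorts C) \<and> finite (Funs C) \<and> finite (Eqs C)"

inductive prov_eq :: "('s,'f) catpres \<Rightarrow> ('s,'f) path \<Rightarrow> ('s,'f) path \<Rightarrow> bool"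
  for C :: "('s,'f) catpres" where
  ax: "(u,v) \<in> Eqs C \<Longrightarrow> prov_eq C u v"
| refl: "is_path C u t \<Longrightarrow> prov_eq C u u"
| sym: "prov_eq C u v \<Longrightarrow> prov_eq C v u"
| trans: "prov_eq C u v \<Longrightarrow> prov_eq C v w \<Longrightarrow> prov_eq C u w"
| post: "prov_eq C (s,u) (s',v) \<Longrightarrow> is_path C (s,u) t \<Longrightarrow> f \<in> Funs C \<Longrightarrow> fsrc C f = t
         \<Longrightarrow> prov_eq C (s, u @ [f]) (s', v @ [f])"
| pre: "prov_eq C (s,u) (s',v) \<Longrightarrow> g \<in> Funs C \<Longrightarrow> ftgt C g = s
         \<Longrightarrow> prov_eq C (fsrc C g, g # u) (fsrc C g, g # v)"

text \<open>Morphisms of [[C]] are provable-equality classes of paths, so a functor out of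
  [[C]]^op x [[D]] is given by an action of pairs of paths respecting provable equality.
  act P u v : P(c,d) -> P(c',d') for u : c' -> c in C and v : d -> d' in D.\<close>

record ('sc,'fc,'sd,'fd,'e) profunctor =
  el :: "'sc \<Rightarrow> 'sd \<Rightarrow> 'e set"
  act :: "('sc,'fc) path \<Rightarrow> ('sd,'fd) path \<Rightarrow> 'e \<Rightarrow> 'e"

definition is_profunctor ::
  "('sc,'fc) catpres \<Rightarrow> ('sd,'fd) catpres \<Rightarrow> ('sc,'fc,'sd,'fd,'e) profunctor \<Rightarrow> bool" where
  "is_profunctor C D P \<longleftrightarrow>
     (\<forall>c d. el P c d \<noteq> {} \<longrightarrow> c \<in> Sorts C \<and> d \<in> Sorts D) \<and>
     (\<forall>u v c d' x. is_path C u c \<and> is_path D v d' \<and> x \<in> el P c (fst v)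
         \<longrightarrow> act P u v x \<in> el P (fst u) d') \<and>
     (\<forall>c d x. x \<in> el P c d \<longrightarrow> act P (c,[]) (d,[]) x = x) \<and>
     (\<forall>c0 c1 c2 u1 u2 d0 d1 d2 v1 v2 x.
         is_chain C c2 u1 c1 \<and> is_chain C c1 u2 c0 \<and>
         is_chain D d0 v1 d1 \<and> is_chain D d1 v2 d2 \<and> x \<in> el P c0 d0
         \<longrightarrow> act P (c2, u1 @ u2) (d0, v1 @ v2) x
             = act P (c2, u1) (d1, v2) (act P (c1, u2) (d0, v1) x)) \<and>
     (\<forall>u u' v v' c d' x. prov_eq C u u' \<and> is_path C u c \<and> prov_eq D v v' \<and> is_path D v d'
         \<and> x \<in> el P c (fst v) \<longrightarrow> act P u v x = act P u' v' x)"

definition prof_iso ::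
  "('sc,'fc) catpres \<Rightarrow> ('sd,'fd) catpres \<Rightarrow> ('sc,'fc,'sd,'fd,'a) profunctor
     \<Rightarrow> ('sc,'fc,'sd,'fd,'b) profunctor \<Rightarrow> bool" where
  "prof_iso C D P Q \<longleftrightarrow> (\<exists>\<phi>.
     (\<forall>c\<in>Sorts C. \<forall>d\<in>Sorts D. bij_betw (\<phi> c d) (el P c d) (el Q c d)) \<and>
     (\<forall>u v c d' x. is_path C u c \<and> is_path D v d' \<and> x \<in> el P c (fst v)
        \<longrightarrow> \<phi> (fst u) d' (act P u v x) = act Q u v (\<phi> c (fst v) x)))"

definition comp_carrier where
  "comp_carrier D P Q c e = {(d,p,q). d \<in> Sorts D \<and> p \<in> el P c d \<and> q \<in> el Q d e}"

definition comp_gen ::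
  "('sd,'fd) catpres \<Rightarrow> ('sc,'fc,'sd,'fd,'a) profunctor \<Rightarrow> ('sd,'fd,'se,'fe,'b) profunctor
     \<Rightarrow> 'sc \<Rightarrow> 'se \<Rightarrow> (('sd \<times> 'a \<times> 'b) \<times> ('sd \<times> 'a \<times> 'b)) set" where
  "comp_gen D P Q c e =
     {((d, p, act Q (d,g) (e,[]) q'), (d', act P (c,[]) (d,g) p, q')) | d d' g p q'.
        is_chain D d g d' \<and> p \<in> el P c d \<and> q' \<in> el Q d' e}"

definition comp_rel where
  "comp_rel D P Q c e =
     (Id_on (comp_carrier D P Q c e) \<union> comp_gen D P Q c e \<union> (comp_gen D P Q c e)\<inverse>)\<^sup>*"

definition prof_comp ::
  "('sc,'fc) catpres \<Rightarrow> ('sd,'fd) catpres \<Rightarrow> ('se,'fe) catpres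
     \<Rightarrow> ('sc,'fc,'sd,'fd,'a) profunctor \<Rightarrow> ('sd,'fd,'se,'fe,'b) profunctor
     \<Rightarrow> ('sc,'fc,'se,'fe,('sd \<times> 'a \<times> 'b) set) profunctor" where
  "prof_comp C D E P Q =
     \<lparr> el = (\<lambda>c e. comp_carrier D P Q c e // comp_rel D P Q c e),
       act = (\<lambda>u w X. \<Union>x\<in>X. comp_rel D P Q (fst u) (path_tgt E w) ``
                {(fst x, act P u (fst x, []) (fst (snd x)), act Q (fst x, []) w (snd (snd x)))}) \<rparr>"

record ('sc,'fc,'sd,'fd,'f) profpres =
  PFuns :: "'f set"
  psrc :: "'f \<Rightarrow> 'sc"
  ptgt :: "'f \<Rightarrow> 'sd"
  PEqs :: "((('sc + 'sd), ('fc + 'f + 'fd)) path \<times> (('sc + 'sd), ('fc + 'f + 'fd)) path) set"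

definition emb_l :: "('sc,'fc) path \<Rightarrow> ('sc + 'sd, 'fc + 'f + 'fd) path" where
  "emb_l u = (Inl (fst u), map Inl (snd u))"

definition emb_r :: "('sd,'fd) path \<Rightarrow> ('sc + 'sd, 'fc + 'f + 'fd) path" where
  "emb_r v = (Inr (fst v), map (Inr \<circ> Inr) (snd v))"

definition total ::
  "('sc,'fc) catpres \<Rightarrow> ('sd,'fd) catpres \<Rightarrow> ('sc,'fc,'sd,'fd,'f) profpres
     \<Rightarrow> ('sc + 'sd, 'fc + 'f + 'fd) catpres" where
  "total C D P =
     \<lparr> Sorts = Inl ` Sorts C \<union> Inr ` Sorts D,
       Funs = Inl ` Funs C \<union> (Inr \<circ> Inl) ` PFuns P \<union> (Inr \<circ> Inr) ` Funs D,
       fsrc = case_sum (Inl \<circ> fsrc C) (case_sum (Inl \<circ> psrc P) (Inr \<circ> fsrc D)),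
       ftgt = case_sum (Inl \<circ> ftgt C) (case_sum (Inr \<circ> ptgt P) (Inr \<circ> ftgt D)),
       Eqs = (\<lambda>(u,v). (emb_l u, emb_l v)) ` Eqs C \<union> PEqs P \<union> (\<lambda>(u,v). (emb_r u, emb_r v)) ` Eqs D \<rparr>"

definition cross_path where
  "cross_path C D P c d t \<longleftrightarrow> fst t = Inl c \<and> is_path (total C D P) t (Inr d)"

definition profpres_wf ::
  "('sc,'fc) catpres \<Rightarrow> ('sd,'fd) catpres \<Rightarrow> ('sc,'fc,'sd,'fd,'f) profpres \<Rightarrow> bool" where
  "profpres_wf C D P \<longleftrightarrow>
     (\<forall>p\<in>PFuns P. psrc P p \<in> Sorts C \<and> ptgt P p \<in> Sorts D) \<and>
     (\<forall>(u,v)\<in>PEqs P. \<exists>c d. cross_path C D P c d u \<and> cross_path C D P c d v)"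

definition finite_profpres :: "('sc,'fc,'sd,'fd,'f) profpres \<Rightarrow> bool" where
  "finite_profpres P \<longleftrightarrow> finite (PFuns P) \<and> finite (PEqs P)"

definition pres_prof ::
  "('sc,'fc) catpres \<Rightarrow> ('sd,'fd) catpres \<Rightarrow> ('sc,'fc,'sd,'fd,'f) profpres
     \<Rightarrow> ('sc,'fc,'sd,'fd,('sc + 'sd, 'fc + 'f + 'fd) path set) profunctor" where
  "pres_prof C D P =
     \<lparr> el = (\<lambda>c d. {t. cross_path C D P c d t} // {(x,y). prov_eq (total C D P) x y}),
       act = (\<lambda>u v X. \<Union>t\<in>X. {t'. prov_eq (total C D P)
                 (Inl (fst u), snd (emb_l u :: ('sc + 'sd, 'fc + 'f + 'fd) path) @ snd t
                     @ snd (emb_r v :: ('sc + 'sd, 'fc + 'f + 'fd) path)) t'}) \<rparr>"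

definition rcp where
  "rcp C D P c t \<longleftrightarrow> (\<exists>p g d. t = (Inl c, Inr (Inl p) # map (Inr \<circ> Inr) g) \<and>
       p \<in> PFuns P \<and> psrc P p = c \<and> is_chain D (ptgt P p) g d)"

inductive inst_eq for C :: "('sc,'fc) catpres" and D :: "('sd,'fd) catpres"
    and P :: "('sc,'fc,'sd,'fd,'f) profpres" and c :: 'sc where
  ax: "(t,t') \<in> PEqs P \<Longrightarrow> rcp C D P c t \<Longrightarrow> rcp C D P c t' \<Longrightarrow> inst_eq C D P c t t'"
| refl: "rcp C D P c t \<Longrightarrow> inst_eq C D P c t t"
| sym: "inst_eq C D P c t t' \<Longrightarrow> inst_eq C D P c t' t"
| trans: "inst_eq C D P c t t' \<Longrightarrow> inst_eq C D P c t' t'' \<Longrightarrow> inst_eq C D P c t t''"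
| app: "inst_eq C D P c t t' \<Longrightarrow> is_path (total C D P) t (Inr d) \<Longrightarrow> g \<in> Funs D \<Longrightarrow> fsrc D g = d
        \<Longrightarrow> inst_eq C D P c (fst t, snd t @ [Inr (Inr g)]) (fst t', snd t' @ [Inr (Inr g)])"
| deq: "rcp C D P c t \<Longrightarrow> is_path (total C D P) t (Inr d) \<Longrightarrow> (u,v) \<in> Eqs D \<Longrightarrow> fst u = d
        \<Longrightarrow> inst_eq C D P c (fst t, snd t @ map (Inr \<circ> Inr) (snd u))
                             (fst t, snd t @ map (Inr \<circ> Inr) (snd v))"

definition nongenerative where
  "nongenerative C D P \<longleftrightarrow>
     (\<forall>f\<in>Funs C. \<forall>p\<in>PFuns P. ftgt C f = psrc P p \<longrightarrow>
        (\<exists>t. rcp C D P (fsrc C f) t \<and>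
             prov_eq (total C D P) (Inl (fsrc C f), [Inl f, Inr (Inl p)]) t))"

definition conservative where
  "conservative C D P \<longleftrightarrow>
     (\<forall>c t t'. rcp C D P c t \<and> rcp C D P c t' \<and> prov_eq (total C D P) t t'
        \<longrightarrow> inst_eq C D P c t t')"

definition curryable where
  "curryable C D P \<longleftrightarrow> nongenerative C D P \<and> conservative C D P"

end

theory Submission
  imports Defs
begin

lemma chain_src: "is_chain X s xs t \<Longrightarrow> s \<in> Sorts X"
  by (cases xs) auto

lemma chain_tgt_sort: "is_chain X s xs t \<Longrightarrow> t \<in> Sorts X"
  by (induction xs arbitrary: s) auto

lemma chain_tgt_unique: "is_chain X s xs t \<Longrightarrow> is_chain X s xs t' \<Longrightarrow> t = t'"
  by (induction xs arbitrary: s) auto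

lemma chain_append: "is_chain X s (a @ b) t \<longleftrightarrow> (\<exists>m. is_chain X s a m \<and> is_chain X m b t)"
  by (induction a arbitrary: s) (auto dest: chain_src)

lemma chain_snoc: "is_chain X s (a @ [f]) t \<longleftrightarrow> (\<exists>m. is_chain X s a m \<and> f \<in> Funs X \<and> fsrc X f = m \<and> ftgt X f = t \<and> t \<in> Sorts X)"
  by (auto simp: chain_append dest: chain_tgt_sort)

lemma total_simps[simp]:
  "Sorts (total C D P) = Inl ` Sorts C \<union> Inr ` Sorts D"
  "Inl f \<in> Funs (total C D P) \<longleftrightarrow> f \<in> Funs C"
  "Inr (Inl p) \<in> Funs (total C D P) \<longleftrightarrow> p \<in> PFuns P"
  "Inr (Inr g) \<in> Funs (total C D P) \<longleftrightarrow> g \<in> Funs D"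
  "fsrc (total C D P) (Inl f) = Inl (fsrc C f)"
  "fsrc (total C D P) (Inr (Inl p)) = Inl (psrc P p)"
  "fsrc (total C D P) (Inr (Inr g)) = Inr (fsrc D g)"
  "ftgt (total C D P) (Inl f) = Inl (ftgt C f)"
  "ftgt (total C D P) (Inr (Inl p)) = Inr (ptgt P p)"
  "ftgt (total C D P) (Inr (Inr g)) = Inr (ftgt D g)"
  by (auto simp: total_def)

lemma Inl_sort_total[simp]: "Inl c \<in> Sorts (total C D P) \<longleftrightarrow> c \<in> Sorts C" by auto
lemma Inr_sort_total[simp]: "Inr d \<in> Sorts (total C D P) \<longleftrightarrow> d \<in> Sorts D" by auto

lemma chain_total_R:
  "is_chain (total C D P) (Inr d) xs t \<longleftrightarrow>
     (\<exists>g d'. t = Inr d' \<and> xs = map (Inr \<circ> Inr) g \<and> is_chain D d g d')"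
proof (induction xs arbitrary: d)
  case Nil then show ?case by auto
next
  case (Cons a xs)
  show ?case
  proof (cases a)
    case (Inl f) then show ?thesis by auto
  next
    case (Inr b) then show ?thesis
    proof (cases b)
      case (Inl p) then show ?thesis using Inr by auto
    next
      case (Inr g) then show ?thesis using \<open>a = Inr b\<close> Cons.IH
        apply (auto simp: Cons.IH)
        subgoal for ga d' by (rule exI[of _ "g # ga"]) auto
        done
    qed
  qed
qed

lemma chain_total_L:
  "is_chain (total C D P) (Inl c) xs (Inl c') \<longleftrightarrow> (\<exists>x. xs = map Inl x \<and> is_chain C c x c')"
proof (induction xs arbitrary: c)
  case Nil then show ?case by auto
next
  case (Cons a xs)
  show ?case
  proof (cases a)
    case (Inl f) then show ?thesis using Cons.IH
      apply auto
      subgoal for x by (rule exI[of _ "f # x"]) auto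
      done
  next
    case (Inr b) then show ?thesis
    proof (cases b)
      case (Inl p) then show ?thesis using Inr by (auto simp: chain_total_R)
    next
      case (Inr g) then show ?thesis using \<open>a = Inr b\<close> by auto
    qed
  qed
qed

lemma chain_total_X:
  "is_chain (total C D P) (Inl c) xs (Inr d) \<longleftrightarrow>
     (\<exists>x p g. xs = map Inl x @ Inr (Inl p) # map (Inr \<circ> Inr) g \<and> is_chain C c x (psrc P p)
        \<and> p \<in> PFuns P \<and> is_chain D (ptgt P p) g d)"
proof (induction xs arbitrary: c)
  case Nil then show ?case by auto
next
  case (Cons a xs)
  show ?case
  proof (cases a)
    case (Inl f) 
    have "is_chain (total C D P) (Inl c) (a # xs) (Inr d) \<longleftrightarrow>
       c \<in> Sorts C \<and> f \<in> Funs C \<and> fsrc C f = c \<and> is_chain (total C D P) (Inl (ftgt C f)) xs (Inr d)"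
      using Inl by auto
    also have "\<dots> \<longleftrightarrow> (\<exists>x p g. a # xs = map Inl x @ Inr (Inl p) # map (Inr \<circ> Inr) g \<and> is_chain C c x (psrc P p)
        \<and> p \<in> PFuns P \<and> is_chain D (ptgt P p) g d)"
      unfolding Cons.IH using Inl
      apply safe
         apply (rule_tac x="f # x" in exI, auto)[1]
      apply (auto simp: Cons_eq_append_conv)
      by blast
    finally show ?thesis .
  next
    case (Inr b) then show ?thesis
    proof (cases b)
      case (Inl p) then show ?thesis using Inr
        apply (auto simp: chain_total_R Cons_eq_append_conv o_def)
        subgoal for g by (rule exI[of _ "[]"]) auto
        done
    next
      case (Inr g) then show ?thesis using \<open>a = Inr b\<close> 
        by (auto simp: Cons_eq_append_conv)
    qed
  qed
qed


lemma chain_emb_l[simp]: "is_chain (total C D P) (Inl c) (map Inl x) (Inl c') \<longleftrightarrow> is_chain C c x c'"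
  by (auto simp: chain_total_L inj_map_eq_map)

lemma chain_emb_r[simp]: "is_chain (total C D P) (Inr d) (map (Inr \<circ> Inr) g) (Inr d') \<longleftrightarrow> is_chain D d g d'"
  using inj_map_eq_map[of "Inr \<circ> Inr" g] by (auto simp: chain_total_R inj_def)

definition cp_ok :: "('s,'f) catpres \<Rightarrow> bool" where
  "cp_ok X \<longleftrightarrow> (\<forall>f\<in>Funs X. fsrc X f \<in> Sorts X \<and> ftgt X f \<in> Sorts X) \<and>
     (\<forall>(u,v)\<in>Eqs X. fst u = fst v \<and> (\<exists>t. is_path X u t \<and> is_path X v t))"

lemma prov_eq_paths:
  assumes "prov_eq X u v" "cp_ok X"
  shows "fst u = fst v \<and> (\<exists>t. is_path X u t \<and> is_path X v t)"
  using assms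
proof (induction rule: prov_eq.induct)
  case (ax u v) then show ?case by (auto simp: cp_ok_def)
next
  case (refl u t) then show ?case by auto
next
  case (sym u v) then show ?case by auto
next
  case (trans u v w) then show ?case by (auto simp: is_path_def) (metis chain_tgt_unique)
next
  case (post s u s' v t f)
  then obtain t' where "is_path X (s,u) t'" "is_path X (s',v) t'" "s = s'" by auto
  with post have "t' = t" by (auto simp: is_path_def dest: chain_tgt_unique)
  with post \<open>is_path X (s',v) t'\<close> show ?case
    by (auto simp: is_path_def chain_snoc cp_ok_def intro!: exI[of _ "ftgt X f"])
next
  case (pre s u s' v g)
  then show ?case by (auto simp: is_path_def cp_ok_def)
qed

lemma prov_post_path:
  assumes "prov_eq X (s,u) (s,v)" "is_path X (s,u) t" "is_chain X t w t'"
  shows "prov_eq X (s, u @ w) (s, v @ w)"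
  using assms(3)
proof (induction w arbitrary: t' rule: rev_induct)
  case Nil then show ?case using assms by simp
next
  case (snoc f w)
  then obtain m where m: "is_chain X t w m" "f \<in> Funs X" "fsrc X f = m" by (auto simp: chain_snoc)
  have "prov_eq X (s, u @ w) (s, v @ w)" using snoc.IH m(1) .
  moreover have "is_path X (s, u @ w) m" using assms(2) m(1) by (auto simp: is_path_def chain_append)
  ultimately show ?case using prov_eq.post m by fastforce
qed

lemma prov_pre_path:
  assumes "prov_eq X (s,u) (s,v)" "is_chain X s0 w s"
  shows "prov_eq X (s0, w @ u) (s0, w @ v)"
  using assms(2)
proof (induction w arbitrary: s0)
  case Nil then show ?case using assms by simp
next
  case (Cons g w)
  then have "prov_eq X (ftgt X g, w @ u) (ftgt X g, w @ v)" by simp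
  from prov_eq.pre[OF this] Cons.prems show ?case by auto
qed

lemma prov_emb_l:
  "prov_eq C u v \<Longrightarrow> prov_eq (total C D P) (emb_l u) (emb_l v)"
proof (induction rule: prov_eq.induct)
  case (ax u v) then show ?case by (intro prov_eq.ax) (force simp: total_def)
next
  case (refl u t) then show ?case
    by (intro prov_eq.refl[of _ _ "Inl t"]) (auto simp: emb_l_def is_path_def)
next
  case (sym u v) then show ?case by (blast intro: prov_eq.sym)
next
  case (trans u v w) then show ?case by (blast intro: prov_eq.trans)
next
  case (post s u s' v t f)
  then show ?case
    using prov_eq.post[of "total C D P" "Inl s" "map Inl u" "Inl s'" "map Inl v" "Inl t" "Inl f"]
    by (auto simp: emb_l_def is_path_def)
next
  case (pre s u s' v g)
  then show ?case
    using prov_eq.pre[of "total C D P" "Inl s" "map Inl u" "Inl s'" "map Inl v" "Inl g"]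
    by (auto simp: emb_l_def)
qed

lemma prov_emb_r:
  "prov_eq D u v \<Longrightarrow> prov_eq (total C D P) (emb_r u) (emb_r v)"
proof (induction rule: prov_eq.induct)
  case (ax u v) then show ?case by (intro prov_eq.ax) (force simp: total_def)
next
  case (refl u t) then show ?case
    by (intro prov_eq.refl[of _ _ "Inr t"]) (auto simp: emb_r_def is_path_def)
next
  case (sym u v) then show ?case by (blast intro: prov_eq.sym)
next
  case (trans u v w) then show ?case by (blast intro: prov_eq.trans)
next
  case (post s u s' v t f)
  then show ?case
    using prov_eq.post[of "total C D P" "Inr s" "map (Inr \<circ> Inr) u" "Inr s'" "map (Inr \<circ> Inr) v" "Inr t" "Inr (Inr f)"]
    by (auto simp: emb_r_def is_path_def)
next
  case (pre s u s' v g)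
  then show ?case
    using prov_eq.pre[of "total C D P" "Inr s" "map (Inr \<circ> Inr) u" "Inr s'" "map (Inr \<circ> Inr) v" "Inr (Inr g)"]
    by (auto simp: emb_r_def)
qed


lemma chain_D_snoc: "is_chain D d g d' \<Longrightarrow> f \<in> Funs D \<Longrightarrow> fsrc D f = d' \<Longrightarrow> ftgt D f \<in> Sorts D
   \<Longrightarrow> is_chain D d (g @ [f]) (ftgt D f)"
  by (auto simp: chain_snoc)

locale ppw =
  fixes C :: "('sc,'fc) catpres" and D :: "('sd,'fd) catpres" and P :: "('sc,'fc,'sd,'fd,'fp) profpres"
  assumes wfC: "catpres_wf C" and wfD: "catpres_wf D" and wfP: "profpres_wf C D P"
begin

abbreviation "T \<equiv> total C D P"

lemma psrc_sort: "p \<in> PFuns P \<Longrightarrow> psrc P p \<in> Sorts C"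
  and ptgt_sort: "p \<in> PFuns P \<Longrightarrow> ptgt P p \<in> Sorts D"
  using wfP by (auto simp: profpres_wf_def)

lemma ftgtD: "f \<in> Funs D \<Longrightarrow> ftgt D f \<in> Sorts D" and fsrcD: "f \<in> Funs D \<Longrightarrow> fsrc D f \<in> Sorts D"
  using wfD by (auto simp: catpres_wf_def)

lemma cpok: "cp_ok T"
proof -
  have f: "\<forall>f\<in>Funs T. fsrc T f \<in> Sorts T \<and> ftgt T f \<in> Sorts T"
    using wfC wfD wfP by (auto simp: total_def catpres_wf_def profpres_wf_def)
  have "fst u = fst v \<and> (\<exists>t. is_path T u t \<and> is_path T v t)" if "(u,v) \<in> Eqs T" for u v
  proof -
    from that consider "(u,v) \<in> (\<lambda>(u,v). (emb_l u, emb_l v)) ` Eqs C" | "(u,v) \<in> PEqs P"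
      | "(u,v) \<in> (\<lambda>(u,v). (emb_r u, emb_r v)) ` Eqs D"
      by (simp only: total_def catpres.select_convs) blast
    then show "fst u = fst v \<and> (\<exists>t. is_path T u t \<and> is_path T v t)"
    proof cases
      case 1 then obtain u0 v0 where "(u0,v0) \<in> Eqs C" "u = emb_l u0" "v = emb_l v0" by auto
      moreover obtain t where "fst u0 = fst v0" "is_path C u0 t" "is_path C v0 t"
        using wfC \<open>(u0,v0) \<in> Eqs C\<close> by (fastforce simp: catpres_wf_def)
      ultimately show ?thesis by (auto simp: emb_l_def is_path_def intro!: exI[of _ "Inl t"])
    next
      case 2 with wfP show ?thesis by (fastforce simp: profpres_wf_def cross_path_def)
    next
      case 3 then obtain u0 v0 where "(u0,v0) \<in> Eqs D" "u = emb_r u0" "v = emb_r v0" by auto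
      moreover obtain t where "fst u0 = fst v0" "is_path D u0 t" "is_path D v0 t"
        using wfD \<open>(u0,v0) \<in> Eqs D\<close> by (fastforce simp: catpres_wf_def)
      ultimately show ?thesis by (auto simp: emb_r_def is_path_def intro!: exI[of _ "Inr t"])
    qed
  qed
  then have "\<forall>(u,v)\<in>Eqs T. fst u = fst v \<and> (\<exists>t. is_path T u t \<and> is_path T v t)" by blast
  with f show ?thesis by (simp add: cp_ok_def)
qed

lemma prov_paths: "prov_eq T u v \<Longrightarrow> fst u = fst v \<and> (\<exists>t. is_path T u t \<and> is_path T v t)"
  using prov_eq_paths cpok by blast

lemma prov_same_tgt: "prov_eq T u v \<Longrightarrow> is_path T u t \<Longrightarrow> is_path T v t \<and> fst u = fst v"
  using prov_paths by (metis is_path_def chain_tgt_unique)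

lemma path_snoc_D: "is_path T t (Inr d) \<Longrightarrow> is_chain D d g d' \<Longrightarrow>
    is_path T (fst t, snd t @ map (Inr \<circ> Inr) g) (Inr d')"
  by (auto simp: is_path_def chain_append)

lemma rcp_path: "rcp C D P c t \<Longrightarrow> \<exists>d. is_path T t (Inr d) \<and> fst t = Inl c"
  by (auto simp: rcp_def is_path_def chain_total_X psrc_sort intro!: exI[of _ "[]"])

lemma rcp_snoc: "rcp C D P c t \<Longrightarrow> is_path T t (Inr d) \<Longrightarrow> is_chain D d g d' \<Longrightarrow>
    rcp C D P c (fst t, snd t @ map (Inr \<circ> Inr) g)"
proof -
  assume a: "rcp C D P c t" "is_path T t (Inr d)" "is_chain D d g d'"
  then obtain p g0 d0 where t: "t = (Inl c, Inr (Inl p) # map (Inr \<circ> Inr) g0)" "p \<in> PFuns P"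
    "psrc P p = c" "is_chain D (ptgt P p) g0 d0" by (auto simp: rcp_def)
  then have "is_chain D (ptgt P p) g0 d" using a(2) by (auto simp: is_path_def)
  then have "is_chain D (ptgt P p) (g0 @ g) d'" using a(3) by (auto simp: chain_append)
  then show ?thesis using t by (auto simp: rcp_def intro!: exI[of _ "g0 @ g"])
qed

lemma inst_sound: "inst_eq C D P c t t' \<Longrightarrow> prov_eq T t t'"
proof (induction rule: inst_eq.induct)
  case (ax t t') then show ?case by (intro prov_eq.ax) (auto simp: total_def)
next
  case (refl t) then show ?case using rcp_path prov_eq.refl by metis
next
  case (sym t t') then show ?case by (blast intro: prov_eq.sym)
next
  case (trans t t' t'') then show ?case by (blast intro: prov_eq.trans)
next
  case (app t t' d g)
  have "prov_eq T (fst t, snd t) (fst t', snd t')" using app by simp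
  from prov_eq.post[OF this, of "Inr d" "Inr (Inr g)"] app show ?case by auto
next
  case (deq t d u v)
  have "prov_eq T (emb_r u) (emb_r v)" by (rule prov_eq.ax) (use deq in \<open>force simp: total_def\<close>)
  moreover have "fst v = d" using wfD deq by (auto simp: catpres_wf_def)
  ultimately have "prov_eq T (Inr d, map (Inr \<circ> Inr) (snd u)) (Inr d, map (Inr \<circ> Inr) (snd v))"
    using deq by (auto simp: emb_r_def)
  from prov_pre_path[OF this] deq show ?case by (auto simp: is_path_def)
qed

lemma inst_rcp: "inst_eq C D P c t t' \<Longrightarrow> rcp C D P c t \<and> rcp C D P c t'"
proof (induction rule: inst_eq.induct)
  case (app t t' d g)
  then have "is_path T t' (Inr d)" using inst_sound prov_same_tgt by blast
  then show ?case using app rcp_snoc[of c _ d "[g]" "ftgt D g"] ftgtD fsrcD by auto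
next
  case (deq t d u v)
  then obtain d' where "is_path D u d'" "is_path D v d'" "fst v = d"
    using wfD by (fastforce simp: catpres_wf_def)
  then show ?case using deq rcp_snoc[of c t d "snd u" d'] rcp_snoc[of c t d "snd v" d']
    by (auto simp: is_path_def)
qed auto

lemma nongen_rcp:
  assumes ng: "nongenerative C D P"
  shows "is_chain C c x (psrc P p) \<Longrightarrow> p \<in> PFuns P \<Longrightarrow> is_chain D (ptgt P p) g d \<Longrightarrow>
    \<exists>r. rcp C D P c r \<and> prov_eq T (Inl c, map Inl x @ Inr (Inl p) # map (Inr \<circ> Inr) g) r"
proof (induction x arbitrary: c)
  case Nil
  let ?r = "(Inl c, Inr (Inl p) # map (Inr \<circ> Inr) g)"
  have r: "rcp C D P c ?r" using Nil by (auto simp: rcp_def)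
  from rcp_path[OF r] obtain d0 where "is_path T ?r (Inr d0)" by blast
  then have "prov_eq T ?r ?r" by (rule prov_eq.refl)
  with r show ?case by (intro exI[of _ ?r]) (simp add: o_def)
next
  case (Cons f x)
  have "is_chain C (ftgt C f) x (psrc P p)" using Cons.prems(1) by simp
  from Cons.IH[OF this Cons.prems(2,3)] obtain r where r: "rcp C D P (ftgt C f) r"
    "prov_eq T (Inl (ftgt C f), map Inl x @ Inr (Inl p) # map (Inr \<circ> Inr) g) r" by blast
  then obtain p' g' d' where r': "r = (Inl (ftgt C f), Inr (Inl p') # map (Inr \<circ> Inr) g')"
    "p' \<in> PFuns P" "psrc P p' = ftgt C f" "is_chain D (ptgt P p') g' d'" by (auto simp: rcp_def)
  have c: "c = fsrc C f" "f \<in> Funs C" using Cons by auto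
  have 1: "prov_eq T (Inl c, map Inl (f # x) @ Inr (Inl p) # map (Inr \<circ> Inr) g)
     (Inl c, Inl f # Inr (Inl p') # map (Inr \<circ> Inr) g')"
  proof -
    have "prov_eq T (Inl (ftgt C f), map Inl x @ Inr (Inl p) # map (Inr \<circ> Inr) g)
           (Inl (ftgt C f), Inr (Inl p') # map (Inr \<circ> Inr) g')" using r(2) r'(1) by simp
    from prov_eq.pre[OF this, of "Inl f"] c show ?thesis by simp
  qed
  obtain t where t: "rcp C D P c t" "prov_eq T (Inl c, [Inl f, Inr (Inl p')]) t"
    using ng c r'(2,3) unfolding nongenerative_def by metis
  obtain ts where ts: "t = (Inl c, ts)" using rcp_path[OF t(1)] by (cases t) auto
  have pth: "is_path T (Inl c, [Inl f, Inr (Inl p')]) (Inr (ptgt P p'))"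
    using c r' ptgt_sort psrc_sort wfC by (auto simp: is_path_def catpres_wf_def)
  have pt: "is_path T t (Inr (ptgt P p'))" using prov_same_tgt[OF t(2) pth] by simp
  have 2: "prov_eq T (Inl c, [Inl f, Inr (Inl p')] @ map (Inr \<circ> Inr) g') (Inl c, ts @ map (Inr \<circ> Inr) g')"
    using prov_post_path[of T "Inl c" "[Inl f, Inr (Inl p')]" ts "Inr (ptgt P p')" "map (Inr \<circ> Inr) g'" "Inr d'"]
      t(2) ts pth r'(4) by simp
  have 3: "rcp C D P c ((Inl c, ts @ map (Inr \<circ> Inr) g') :: ('sc+'sd, 'fc+'fp+'fd) path)"
    using rcp_snoc[OF t(1) pt r'(4)] unfolding ts fst_conv snd_conv .
  have "prov_eq T (Inl c, map Inl (f # x) @ Inr (Inl p) # map (Inr \<circ> Inr) g) (Inl c, ts @ map (Inr \<circ> Inr) g')"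
    using 1 2 prov_eq.trans by fastforce
  with 3 show ?case by blast
qed

end


lemma prof_sorts: "is_profunctor C D X \<Longrightarrow> x \<in> el X c d \<Longrightarrow> c \<in> Sorts C \<and> d \<in> Sorts D"
  unfolding is_profunctor_def by auto

lemma prof_act_in: "is_profunctor C D X \<Longrightarrow> is_path C u c \<Longrightarrow> is_path D v d' \<Longrightarrow> x \<in> el X c (fst v)
  \<Longrightarrow> act X u v x \<in> el X (fst u) d'"
proof -
  assume a: "is_profunctor C D X" "is_path C u c" "is_path D v d'" "x \<in> el X c (fst v)"
  then have "\<forall>u v c d' x. is_path C u c \<and> is_path D v d' \<and> x \<in> el X c (fst v)
         \<longrightarrow> act X u v x \<in> el X (fst u) d'" unfolding is_profunctor_def by (elim conjE) assumption
  then show ?thesis using a by blast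
qed

lemma prof_act_id: "is_profunctor C D X \<Longrightarrow> x \<in> el X c d \<Longrightarrow> act X (c,[]) (d,[]) x = x"
  unfolding is_profunctor_def by auto

lemma prof_swap:
  assumes "is_profunctor C D X" "is_chain C c2 u c1" "is_chain D d0 v d1" "x \<in> el X c1 d0"
  shows "act X (c2,u) (d1,[]) (act X (c1,[]) (d0,v) x) = act X (c2,[]) (d0,v) (act X (c2,u) (d0,[]) x)"
proof -
  have s: "c1 \<in> Sorts C" "d1 \<in> Sorts D" "c2 \<in> Sorts C" "d0 \<in> Sorts D"
    using assms by (auto dest: chain_tgt_sort chain_src)
  have comp: "\<forall>c0 c1 c2 u1 u2 d0 d1 d2 v1 v2 x.
         is_chain C c2 u1 c1 \<and> is_chain C c1 u2 c0 \<and>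
         is_chain D d0 v1 d1 \<and> is_chain D d1 v2 d2 \<and> x \<in> el X c0 d0
         \<longrightarrow> act X (c2, u1 @ u2) (d0, v1 @ v2) x
             = act X (c2, u1) (d1, v2) (act X (c1, u2) (d0, v1) x)"
    using assms(1) unfolding is_profunctor_def by (elim conjE) assumption
  have A: "act X (c2,u) (d0,v) x = act X (c2,u) (d1,[]) (act X (c1,[]) (d0,v) x)"
    using comp[rule_format, of c2 u c1 "[]" c1 d0 v d1 "[]" d1 x] assms s by simp
  have B: "act X (c2,u) (d0,v) x = act X (c2,[]) (d0,v) (act X (c2,u) (d0,[]) x)"
    using comp[rule_format, of c2 "[]" c2 u c1 d0 "[]" d0 v d1 x] assms s by simp
  show ?thesis using A B by simp
qed

lemma chain3: "is_chain X a xs b \<Longrightarrow> is_chain X b ys c \<Longrightarrow> is_chain X c zs d \<Longrightarrow> is_chain X a (xs @ ys @ zs) d"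
  by (auto simp: chain_append)

definition ext :: "('sc,'fc) path \<Rightarrow> ('sc + 'sd, 'fc + 'f + 'fd) path \<Rightarrow> ('sd,'fd) path \<Rightarrow> ('sc + 'sd, 'fc + 'f + 'fd) path" where
  "ext u s v = (Inl (fst u), map Inl (snd u) @ snd s @ map (Inr \<circ> Inr) (snd v))"

context ppw begin

definition cls :: "('sc+'sd,'fc+'fp+'fd) path \<Rightarrow> ('sc+'sd,'fc+'fp+'fd) path set" where
  "cls s = {t. prov_eq T s t}"

lemma pres_el: "el (pres_prof C D P) c d = cls ` {t. cross_path C D P c d t}"
  by (auto simp: pres_prof_def quotient_def cls_def)

lemma cross_sorts: "cross_path C D P c d s \<Longrightarrow> c \<in> Sorts C \<and> d \<in> Sorts D"
  by (auto simp: cross_path_def is_path_def chain_total_X dest: chain_src chain_tgt_sort)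

lemma cls_refl: "cross_path C D P c d s \<Longrightarrow> s \<in> cls s"
  by (auto simp: cls_def cross_path_def intro: prov_eq.refl)

lemma cls_eq: "prov_eq T s s' \<Longrightarrow> cls s = cls s'"
  by (auto simp: cls_def intro: prov_eq.trans prov_eq.sym)

lemma cls_eqD: "cross_path C D P c d s \<Longrightarrow> cls s = cls s' \<Longrightarrow> prov_eq T s s'"
proof -
  assume a: "cross_path C D P c d s" "cls s = cls s'"
  then have "s \<in> cls s'" using cls_refl[OF a(1)] by auto
  then show ?thesis by (auto simp: cls_def intro: prov_eq.sym)
qed

lemma ext_cross: "is_path C u c \<Longrightarrow> is_path D v d' \<Longrightarrow> cross_path C D P c (fst v) s \<Longrightarrow>
   cross_path C D P (fst u) d' (ext u s v)"
  unfolding cross_path_def ext_def is_path_def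
  by (auto intro!: chain3)

lemma prov_ext: "is_path C u c \<Longrightarrow> is_path D v d' \<Longrightarrow> cross_path C D P c (fst v) s \<Longrightarrow> prov_eq T s s' \<Longrightarrow>
   prov_eq T (ext u s v) (ext u s' v)"
proof -
  assume a: "is_path C u c" "is_path D v d'" "cross_path C D P c (fst v) s" "prov_eq T s s'"
  have fs: "fst s' = Inl c" using a prov_paths by (auto simp: cross_path_def)
  have fs2: "fst s = Inl c" using a(3) by (auto simp: cross_path_def)
  have 1: "prov_eq T (Inl c, snd s) (Inl c, snd s')" using a(4) fs fs2 by (metis prod.collapse)
  have 2: "prov_eq T (Inl c, snd s @ map (Inr \<circ> Inr) (snd v)) (Inl c, snd s' @ map (Inr \<circ> Inr) (snd v))"
    using prov_post_path[OF 1, of "Inr (fst v)" "map (Inr \<circ> Inr) (snd v)" "Inr d'"] a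
    by (auto simp: cross_path_def is_path_def)
  have 3: "is_chain T (Inl (fst u)) (map Inl (snd u)) (Inl c)" using a by (auto simp: is_path_def)
  show ?thesis using prov_pre_path[OF 2 3] by (simp add: ext_def)
qed

lemma act_pres: "is_path C u c \<Longrightarrow> is_path D v d' \<Longrightarrow> cross_path C D P c (fst v) s \<Longrightarrow>
   act (pres_prof C D P) u v (cls s) = cls (ext u s v)"
proof -
  assume a: "is_path C u c" "is_path D v d'" "cross_path C D P c (fst v) s"
  have "act (pres_prof C D P) u v (cls s) = (\<Union>t\<in>cls s. cls (ext u t v))"
    by (simp add: pres_prof_def cls_def ext_def emb_l_def emb_r_def)
  also have "\<dots> = cls (ext u s v)"
  proof
    show "(\<Union>t\<in>cls s. cls (ext u t v)) \<subseteq> cls (ext u s v)"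
    proof
      fix x assume "x \<in> (\<Union>t\<in>cls s. cls (ext u t v))"
      then obtain t where t: "prov_eq T s t" "prov_eq T (ext u t v) x" by (auto simp: cls_def)
      have "prov_eq T (ext u s v) (ext u t v)" using prov_ext[OF a t(1)] .
      then show "x \<in> cls (ext u s v)" using t(2) by (auto simp: cls_def intro: prov_eq.trans)
    qed
    show "cls (ext u s v) \<subseteq> (\<Union>t\<in>cls s. cls (ext u t v))"
      using cls_refl[OF a(3)] by auto
  qed
  finally show ?thesis .
qed

end

locale presented = ppw C D P for C :: "('sc,'fc) catpres" and D :: "('sd,'fd) catpres"
    and P :: "('sc,'fc,'sd,'fd,'fp) profpres" +
  fixes PP :: "('sc,'fc,'sd,'fd,'a) profunctor"
    and phi :: "'sc \<Rightarrow> 'sd \<Rightarrow> 'a \<Rightarrow> ('sc+'sd,'fc+'fp+'fd) path set"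
  assumes prof: "is_profunctor C D PP"
  and bij: "\<And>c d. c\<in>Sorts C \<Longrightarrow> d\<in>Sorts D \<Longrightarrow> bij_betw (phi c d) (el PP c d) (el (pres_prof C D P) c d)"
  and natu: "\<And>u v c d' x. is_path C u c \<Longrightarrow> is_path D v d' \<Longrightarrow> x \<in> el PP c (fst v) \<Longrightarrow>
      phi (fst u) d' (act PP u v x) = act (pres_prof C D P) u v (phi c (fst v) x)"
  and cur: "curryable C D P"
begin

definition elt where "elt c d s = inv_into (el PP c d) (phi c d) (cls s)"

definition rep where "rep c d a = (SOME s. cross_path C D P c d s \<and> phi c d a = cls s)"

lemma elt_in: "cross_path C D P c d s \<Longrightarrow> elt c d s \<in> el PP c d \<and> phi c d (elt c d s) = cls s"
proof -
  assume a: "cross_path C D P c d s"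
  then have b: "bij_betw (phi c d) (el PP c d) (el (pres_prof C D P) c d)" using bij cross_sorts by blast
  have "cls s \<in> el (pres_prof C D P) c d" using a pres_el by auto
  then show ?thesis using b unfolding elt_def
    by (metis bij_betw_def bij_betw_inv_into_right inv_into_into)
qed

lemma elt_eq: "prov_eq T s s' \<Longrightarrow> elt c d s = elt c d s'"
  by (simp add: elt_def cls_eq)

lemma rep_prop: "a \<in> el PP c d \<Longrightarrow> cross_path C D P c d (rep c d a) \<and> phi c d a = cls (rep c d a)"
proof -
  assume a: "a \<in> el PP c d"
  then have s: "c \<in> Sorts C" "d \<in> Sorts D" using prof_sorts[OF prof a] by auto
  then have "phi c d a \<in> el (pres_prof C D P) c d" using a bij by (auto simp: bij_betw_def)
  then obtain s where "cross_path C D P c d s \<and> phi c d a = cls s" using pres_el by auto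
  then show ?thesis unfolding rep_def by (rule someI)
qed

lemma elt_rep: "a \<in> el PP c d \<Longrightarrow> elt c d (rep c d a) = a"
proof -
  assume a: "a \<in> el PP c d"
  then have s: "c \<in> Sorts C" "d \<in> Sorts D" using prof_sorts[OF prof a] by auto
  then have "inj_on (phi c d) (el PP c d)" using bij by (auto simp: bij_betw_def)
  then show ?thesis using rep_prop[OF a] a unfolding elt_def by (metis inv_into_f_f)
qed

lemma rep_elt: "cross_path C D P c d s \<Longrightarrow> prov_eq T (rep c d (elt c d s)) s"
proof -
  assume a: "cross_path C D P c d s"
  from elt_in[OF a] have "phi c d (elt c d s) = cls s" "elt c d s \<in> el PP c d" by auto
  with rep_prop[of "elt c d s" c d] have "cls (rep c d (elt c d s)) = cls s" "cross_path C D P c d (rep c d (elt c d s))" by auto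
  then show ?thesis using cls_eqD by blast
qed

lemma elt_nat: "is_path C u c \<Longrightarrow> is_path D v d' \<Longrightarrow> cross_path C D P c (fst v) s \<Longrightarrow>
   elt (fst u) d' (ext u s v) = act PP u v (elt c (fst v) s)"
proof -
  assume a: "is_path C u c" "is_path D v d'" "cross_path C D P c (fst v) s"
  have e: "elt c (fst v) s \<in> el PP c (fst v)" "phi c (fst v) (elt c (fst v) s) = cls s" using elt_in[OF a(3)] by auto
  have x: "act PP u v (elt c (fst v) s) \<in> el PP (fst u) d'" using prof_act_in[OF prof a(1,2) e(1)] .
  have c: "cross_path C D P (fst u) d' (ext u s v)" using ext_cross[OF a] .
  have s: "fst u \<in> Sorts C" "d' \<in> Sorts D" using cross_sorts[OF c] by auto
  have inj: "inj_on (phi (fst u) d') (el PP (fst u) d')" using bij[OF s] by (auto simp: bij_betw_def)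
  have "phi (fst u) d' (act PP u v (elt c (fst v) s)) = cls (ext u s v)"
    using natu[OF a(1,2) e(1)] e(2) act_pres[OF a] by simp
  also have "\<dots> = phi (fst u) d' (elt (fst u) d' (ext u s v))" using elt_in[OF c] by simp
  finally show ?thesis using inj x elt_in[OF c] by (metis inj_onD)
qed

lemma cross_rcp: "cross_path C D P c d s \<Longrightarrow> \<exists>r. rcp C D P c r \<and> prov_eq T s r"
proof -
  assume a: "cross_path C D P c d s"
  then obtain x p g where "s = (Inl c, map Inl x @ Inr (Inl p) # map (Inr \<circ> Inr) g)"
    "is_chain C c x (psrc P p)" "p \<in> PFuns P" "is_chain D (ptgt P p) g d"
    by (cases s) (auto simp: cross_path_def is_path_def chain_total_X)
  then show ?thesis using nongen_rcp cur by (auto simp: curryable_def)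
qed

lemma conserv: "rcp C D P c t \<Longrightarrow> rcp C D P c t' \<Longrightarrow> prov_eq T t t' \<Longrightarrow> inst_eq C D P c t t'"
  using cur unfolding curryable_def conservative_def by blast

end


definition rsym :: "('s, 'a + 'b + 'c) path \<Rightarrow> 'b" where
  "rsym r = projl (projr (hd (snd r)))"
definition rtail :: "('s, 'a + 'b + 'c) path \<Rightarrow> 'c list" where
  "rtail r = map (projr \<circ> projr) (tl (snd r))"

lemma rcp_dec: "rcp C D P c r \<Longrightarrow> r = (Inl c, Inr (Inl (rsym r)) # map (Inr \<circ> Inr) (rtail r)) \<and>
   rsym r \<in> PFuns P \<and> psrc P (rsym r) = c \<and> (\<exists>d. is_chain D (ptgt P (rsym r)) (rtail r) d)"
  by (auto simp: rcp_def rsym_def rtail_def comp_def)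

lemma rcp_mk: "p \<in> PFuns P \<Longrightarrow> psrc P p = c \<Longrightarrow> is_chain D (ptgt P p) g d \<Longrightarrow>
   rcp C D P c (Inl c, Inr (Inl p) # map (Inr \<circ> Inr) g)"
  by (auto simp: rcp_def)

lemma rsym_simp[simp]: "rsym (s, Inr (Inl p) # xs) = p" by (simp add: rsym_def)
lemma rtail_simp[simp]: "rtail (s, Inr (Inl p) # map (Inr \<circ> Inr) g) = g" by (simp add: rtail_def comp_def)

locale compo = P: presented C D P PP phiP + Q: presented D E Q QQ phiQ
  for C :: "('sc,'fc) catpres" and D :: "('sd,'fd) catpres" and E :: "('se,'fe) catpres"
    and P :: "('sc,'fc,'sd,'fd,'fp) profpres" and Q :: "('sd,'fd,'se,'fe,'fq) profpres"
    and PP :: "('sc,'fc,'sd,'fd,'a) profunctor" and QQ :: "('sd,'fd,'se,'fe,'b) profunctor"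
    and phiP phiQ +
  assumes finP: "finite_profpres P" and finQ: "finite_profpres Q" and finC: "finite_catpres C"
begin

definition Sset where "Sset = {(p,q). p \<in> PFuns P \<and> q \<in> PFuns Q \<and> ptgt P p = psrc Q q}"

lemma finS: "finite Sset"
proof -
  have "Sset \<subseteq> PFuns P \<times> PFuns Q" by (auto simp: Sset_def)
  then show ?thesis using finP finQ by (auto simp: finite_profpres_def intro: finite_subset)
qed

definition L where "L = (SOME xs. set xs = Sset \<and> distinct xs)"

lemma L: "set L = Sset \<and> distinct L"
  unfolding L_def using finite_distinct_list[OF finS] by (rule someI_ex)

definition idx where "idx pq = (THE i. i < length L \<and> L ! i = pq)"

lemma idx: "pq \<in> Sset \<Longrightarrow> idx pq < length L \<and> L ! idx pq = pq"
proof -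
  assume "pq \<in> Sset"
  then have "\<exists>!i. i < length L \<and> L ! i = pq" using distinct_Ex1[of L pq] L by auto
  from theI'[OF this] show ?thesis unfolding idx_def .
qed

lemma idx_nth: "i < length L \<Longrightarrow> idx (L ! i) = i"
  using idx[of "L ! i"] L nth_eq_iff_index_eq[of L] by (metis nth_mem)

lemma nth_S: "i < length L \<Longrightarrow> L ! i \<in> Sset" using L nth_mem by metis

definition NFP :: "'sc \<Rightarrow> ('sc+'sd,'fc+'fp+'fd) path \<Rightarrow> ('sc+'sd,'fc+'fp+'fd) path" where
  "NFP c s = (SOME r. rcp C D P c r \<and> prov_eq P.T s r)"
definition NFQ :: "'sd \<Rightarrow> ('sd+'se,'fd+'fq+'fe) path \<Rightarrow> ('sd+'se,'fd+'fq+'fe) path" where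
  "NFQ d y = (SOME r. rcp D E Q d r \<and> prov_eq Q.T y r)"

lemma NFP: "cross_path C D P c d s \<Longrightarrow> rcp C D P c (NFP c s) \<and> prov_eq P.T s (NFP c s)"
  unfolding NFP_def using P.cross_rcp by (rule someI_ex)
lemma NFQ: "cross_path D E Q d e s \<Longrightarrow> rcp D E Q d (NFQ d s) \<and> prov_eq Q.T s (NFQ d s)"
  unfolding NFQ_def using Q.cross_rcp by (rule someI_ex)

definition mk :: "'fp \<Rightarrow> ('sd+'se,'fd+'fq+'fe) path \<Rightarrow> ('sc+'se,'fc+nat+'fe) path" where
  "mk p r = (Inl (psrc P p), Inr (Inl (idx (p, rsym r))) # map (Inr \<circ> Inr) (rtail r))"

definition preQ :: "'fp \<Rightarrow> 'fd list \<Rightarrow> ('sd+'se,'fd+'fq+'fe) path \<Rightarrow> ('sd+'se,'fd+'fq+'fe) path" where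
  "preQ p g t = (Inl (ptgt P p), map Inl g @ snd t)"

definition th1 :: "('sc+'sd,'fc+'fp+'fd) path \<Rightarrow> ('sd+'se,'fd+'fq+'fe) path \<Rightarrow> ('sc+'se,'fc+nat+'fe) path" where
  "th1 r t = mk (rsym r) (NFQ (ptgt P (rsym r)) (preQ (rsym r) (rtail r) t))"

definition th where "th c s t = th1 (NFP c s) t"

definition qpath :: "'fq \<Rightarrow> ('sd+'se,'fd+'fq+'fe) path" where
  "qpath q = (Inl (psrc Q q), [Inr (Inl q)])"

definition E1 where
  "E1 = (\<lambda>((s0,s0'),q). (th1 s0 (qpath q), th1 s0' (qpath q))) `
     {((s0,s0'),q). (s0,s0') \<in> PEqs P \<and> q \<in> PFuns Q \<and> (\<exists>c. rcp C D P c s0 \<and> rcp C D P c s0') \<and>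
        is_path P.T s0 (Inr (psrc Q q))}"

definition E2 where
  "E2 = (\<lambda>((t,t'),p). (mk p t, mk p t')) `
     {((t,t'),p). (t,t') \<in> PEqs Q \<and> p \<in> PFuns P \<and> rcp D E Q (ptgt P p) t \<and> rcp D E Q (ptgt P p) t'}"

definition E3 where
  "E3 = (\<lambda>(f,i). ((Inl (fsrc C f), [Inl f, Inr (Inl i)]),
           th1 (NFP (fsrc C f) (Inl (fsrc C f), [Inl f, Inr (Inl (fst (L ! i)))])) (qpath (snd (L ! i))))) `
     {(f,i). f \<in> Funs C \<and> i < length L \<and> ftgt C f = psrc P (fst (L ! i))}"

definition R :: "('sc,'fc,'se,'fe,nat) profpres" where
  "R = \<lparr> PFuns = {..<length L}, psrc = (\<lambda>i. psrc P (fst (L ! i))), ptgt = (\<lambda>i. ptgt Q (snd (L ! i))),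
         PEqs = E1 \<union> E2 \<union> E3 \<rparr>"

lemma R_simps[simp]: "PFuns R = {..<length L}" "psrc R i = psrc P (fst (L ! i))"
  "ptgt R i = ptgt Q (snd (L ! i))" "PEqs R = E1 \<union> E2 \<union> E3"
  by (auto simp: R_def)

lemma finR: "finite_profpres R"
proof -
  have "finite E1" unfolding E1_def
    by (rule finite_imageI, rule finite_subset[of _ "PEqs P \<times> PFuns Q"]) (use finP finQ in \<open>auto simp: finite_profpres_def\<close>)
  moreover have "finite E2" unfolding E2_def
    by (rule finite_imageI, rule finite_subset[of _ "PEqs Q \<times> PFuns P"]) (use finP finQ in \<open>auto simp: finite_profpres_def\<close>)
  moreover have "finite E3" unfolding E3_def
    by (rule finite_imageI, rule finite_subset[of _ "Funs C \<times> {..<length L}"]) (use finC in \<open>auto simp: finite_catpres_def\<close>)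
  ultimately show ?thesis by (simp add: finite_profpres_def)
qed

end

context ppw begin

lemma rcp_path_iff: "rcp C D P c r \<Longrightarrow> is_path T r (Inr d) \<longleftrightarrow> is_chain D (ptgt P (rsym r)) (rtail r) d"
proof -
  assume r: "rcp C D P c r"
  obtain p g d0 where "r = (Inl c, Inr (Inl p) # map (Inr \<circ> Inr) g)" "p \<in> PFuns P" "psrc P p = c"
    using r by (auto simp: rcp_def)
  then show ?thesis using psrc_sort by (auto simp: is_path_def)
qed

lemma rcp_cross: "rcp C D P c r \<Longrightarrow> is_path T r (Inr d) \<Longrightarrow> cross_path C D P c d r"
  using rcp_path by (auto simp: cross_path_def)

end

context compo begin

lemma mk_lemma:
  assumes r: "rcp D E Q d r" "is_path Q.T r (Inr e)" and p: "p \<in> PFuns P" "ptgt P p = d"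
  shows "rcp C E R (psrc P p) (mk p r) \<and> cross_path C E R (psrc P p) e (mk p r)"
proof -
  have q: "rsym r \<in> PFuns Q" "psrc Q (rsym r) = d" using rcp_dec[OF r(1)] by auto
  have ch: "is_chain E (ptgt Q (rsym r)) (rtail r) e" using Q.rcp_path_iff[OF r(1)] r(2) by simp
  have S: "(p, rsym r) \<in> Sset" using p q by (auto simp: Sset_def)
  note i = idx[OF S]
  have 1: "rcp C E R (psrc P p) (mk p r)"
    unfolding mk_def rcp_def using i ch by auto
  have "is_path (total C E R) (mk p r) (Inr e)"
    unfolding mk_def is_path_def using i ch P.psrc_sort[OF p(1)] by auto
  then show ?thesis using 1 by (auto simp: cross_path_def mk_def)
qed

lemma preQ_cross:
  assumes r: "rcp C D P c r" "is_path P.T r (Inr d)" and t: "cross_path D E Q d e t"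
  shows "cross_path D E Q (ptgt P (rsym r)) e (preQ (rsym r) (rtail r) t)"
proof -
  have ch: "is_chain D (ptgt P (rsym r)) (rtail r) d" using P.rcp_path_iff[OF r(1)] r(2) by simp
  show ?thesis using t ch unfolding cross_path_def preQ_def is_path_def by (auto simp: chain_append intro!: exI[of _ "Inl d"])
qed

lemma th1_lemma:
  assumes r: "rcp C D P c r" "is_path P.T r (Inr d)" and t: "cross_path D E Q d e t"
  shows "rcp C E R c (th1 r t) \<and> cross_path C E R c e (th1 r t)"
proof -
  let ?y = "preQ (rsym r) (rtail r) t"
  have y: "cross_path D E Q (ptgt P (rsym r)) e ?y" by (rule preQ_cross[OF r t])
  note n = NFQ[OF y]
  have pth: "is_path Q.T (NFQ (ptgt P (rsym r)) ?y) (Inr e)"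
    using Q.prov_same_tgt[of ?y _ "Inr e"] n y by (auto simp: cross_path_def)
  have "rsym r \<in> PFuns P" "psrc P (rsym r) = c" using rcp_dec[OF r(1)] by auto
  then show ?thesis using mk_lemma[OF conjunct1[OF n] pth] unfolding th1_def by auto
qed

lemma qpath_cross: "q \<in> PFuns Q \<Longrightarrow> cross_path D E Q (psrc Q q) (ptgt Q q) (qpath q)"
  using Q.psrc_sort Q.ptgt_sort by (auto simp: cross_path_def qpath_def is_path_def)

lemma th_lemma:
  assumes s: "cross_path C D P c d s" and t: "cross_path D E Q d e t"
  shows "rcp C E R c (th c s t) \<and> cross_path C E R c e (th c s t)"
proof -
  note n = NFP[OF s]
  have "is_path P.T (NFP c s) (Inr d)" using P.prov_same_tgt[of s _ "Inr d"] n s by (auto simp: cross_path_def)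
  then show ?thesis using th1_lemma[OF conjunct1[OF n] _ t] unfolding th_def by auto
qed

lemma wfR: "profpres_wf C E R"
proof -
  have syms: "\<forall>p\<in>PFuns R. psrc R p \<in> Sorts C \<and> ptgt R p \<in> Sorts E"
    using nth_S P.psrc_sort Q.ptgt_sort by (fastforce simp: Sset_def)
  have "\<exists>c e. cross_path C E R c e u \<and> cross_path C E R c e v" if uv: "(u,v) \<in> PEqs R" for u v
  proof -
    consider "(u,v) \<in> E1" | "(u,v) \<in> E2" | "(u,v) \<in> E3" using uv by auto
    then show ?thesis
    proof cases
      case 1
      then obtain s0 s0' q c where a: "u = th1 s0 (qpath q)" "v = th1 s0' (qpath q)" "(s0,s0') \<in> PEqs P"
        "q \<in> PFuns Q" "rcp C D P c s0" "rcp C D P c s0'" "is_path P.T s0 (Inr (psrc Q q))"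
        unfolding E1_def by auto
      have "is_path P.T s0' (Inr (psrc Q q))"
      proof -
        have "prov_eq P.T s0 s0'" by (rule prov_eq.ax) (use a in \<open>auto simp: total_def\<close>)
        then show ?thesis using P.prov_same_tgt a by blast
      qed
      then show ?thesis using th1_lemma[OF a(5) a(7) qpath_cross[OF a(4)]]
          th1_lemma[OF a(6) _ qpath_cross[OF a(4)]] a(1,2) by blast
    next
      case 2
      then obtain t t' p where a: "u = mk p t" "v = mk p t'" "(t,t') \<in> PEqs Q" "p \<in> PFuns P"
        "rcp D E Q (ptgt P p) t" "rcp D E Q (ptgt P p) t'"
        unfolding E2_def by auto
      obtain d e where "cross_path D E Q d e t" "cross_path D E Q d e t'"
        using Q.wfP a(3) unfolding profpres_wf_def by blast
      then have "is_path Q.T t (Inr e)" "is_path Q.T t' (Inr e)" by (auto simp: cross_path_def)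
      then show ?thesis using mk_lemma[OF a(5) _ a(4)] mk_lemma[OF a(6) _ a(4)] a(1,2) by blast
    next
      case 3
      then obtain f i where a: "u = (Inl (fsrc C f), [Inl f, Inr (Inl i)])"
        "v = th1 (NFP (fsrc C f) (Inl (fsrc C f), [Inl f, Inr (Inl (fst (L ! i)))])) (qpath (snd (L ! i)))"
        "f \<in> Funs C" "i < length L" "ftgt C f = psrc P (fst (L ! i))"
        unfolding E3_def by auto
      obtain p q where pq: "L ! i = (p,q)" by fastforce
      have S: "p \<in> PFuns P" "q \<in> PFuns Q" "ptgt P p = psrc Q q" using nth_S[OF a(4)] pq by (auto simp: Sset_def)
      have fs: "fsrc C f \<in> Sorts C" "ftgt C f \<in> Sorts C" using P.wfC a(3) by (auto simp: catpres_wf_def)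
      have s: "cross_path C D P (fsrc C f) (ptgt P p) (Inl (fsrc C f), [Inl f, Inr (Inl p)])"
        using a fs S pq P.ptgt_sort Q.psrc_sort by (auto simp: cross_path_def is_path_def)
      have "th (fsrc C f) (Inl (fsrc C f), [Inl f, Inr (Inl p)]) (qpath q) = v"
        using a pq by (simp add: th_def)
      then have v: "cross_path C E R (fsrc C f) (ptgt Q q) v"
        using th_lemma[OF s, of "ptgt Q q" "qpath q"] qpath_cross[OF S(2)] S by auto
      have "cross_path C E R (fsrc C f) (ptgt Q q) u"
        using a fs S pq Q.ptgt_sort by (auto simp: cross_path_def is_path_def)
      then show ?thesis using v by blast
    qed
  qed
  then show ?thesis using syms unfolding profpres_wf_def by blast
qed
end

context ppw begin

lemma inst_app_path:
  assumes "inst_eq C D P c t t'" "is_path T t (Inr d)" "is_chain D d h d'"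
  shows "inst_eq C D P c (fst t, snd t @ map (Inr \<circ> Inr) h) (fst t', snd t' @ map (Inr \<circ> Inr) h)"
  using assms(3)
proof (induction h arbitrary: d' rule: rev_induct)
  case Nil then show ?case using assms(1) by simp
next
  case (snoc g h)
  then obtain m where m: "is_chain D d h m" "g \<in> Funs D" "fsrc D g = m" "d' = ftgt D g"
    by (auto simp: chain_snoc)
  have "is_path T (fst t, snd t @ map (Inr \<circ> Inr) h) (Inr m)" using path_snoc_D[OF assms(2) m(1)] .
  from inst_eq.app[OF snoc.IH[OF m(1)] this m(2,3)] show ?case by (simp add: o_def)
qed

end

context compo begin

sublocale R: ppw C E R
  by unfold_locales (use P.wfC Q.wfD wfR in auto)

lemma mk_snoc: "rcp D E Q d t \<Longrightarrow> mk p (fst t, snd t @ map (Inr \<circ> Inr) h) = (fst (mk p t), snd (mk p t) @ map (Inr \<circ> Inr) h)"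
proof -
  assume "rcp D E Q d t"
  then obtain q g where "t = (Inl d, Inr (Inl q) # map (Inr \<circ> Inr) g)" by (auto simp: rcp_def)
  then show ?thesis by (simp add: mk_def rtail_def rsym_def o_def)
qed

lemma mk_rcp: "rcp D E Q d t \<Longrightarrow> p \<in> PFuns P \<Longrightarrow> ptgt P p = d \<Longrightarrow>
   rcp C E R (psrc P p) (mk p t) \<and> (\<forall>e. is_path Q.T t (Inr e) \<longrightarrow> is_path R.T (mk p t) (Inr e))"
  using mk_lemma Q.rcp_path by (metis cross_path_def)

lemma E2I: "(t,t') \<in> PEqs Q \<Longrightarrow> p \<in> PFuns P \<Longrightarrow> rcp D E Q (ptgt P p) t \<Longrightarrow> rcp D E Q (ptgt P p) t' \<Longrightarrow>
  (mk p t, mk p t') \<in> E2"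
  unfolding E2_def by (rule image_eqI[where x="((t,t'),p)"]) auto

lemma L2:
  assumes "inst_eq D E Q d t t'" "p \<in> PFuns P" "ptgt P p = d"
  shows "inst_eq C E R (psrc P p) (mk p t) (mk p t')"
  using assms(1)
proof (induction rule: inst_eq.induct)
  case (ax t t')
  then show ?case using E2I[OF ax(1) assms(2)] assms mk_rcp[OF ax(2)] mk_rcp[OF ax(3)]
    by (intro inst_eq.ax) auto
next
  case (refl t) then show ?case using mk_rcp[OF refl assms(2,3)] by (intro inst_eq.refl) auto
next
  case (sym t t') then show ?case by (blast intro: inst_eq.sym)
next
  case (trans t t' t'') then show ?case by (blast intro: inst_eq.trans)
next
  case (app t t' e g)
  have rt: "rcp D E Q d t" "rcp D E Q d t'" using Q.inst_rcp[OF app(1)] by auto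
  have "is_path R.T (mk p t) (Inr e)" using mk_rcp[OF rt(1) assms(2,3)] app by auto
  from inst_eq.app[OF app.IH this app(3,4)] show ?case
    using mk_snoc[OF rt(1), of p "[g]"] mk_snoc[OF rt(2), of p "[g]"] by simp
next
  case (deq t e u v)
  have m: "rcp C E R (psrc P p) (mk p t)" "is_path R.T (mk p t) (Inr e)" using mk_rcp[OF deq(1) assms(2,3)] deq by auto
  from inst_eq.deq[OF m deq(3,4)] show ?case
    using mk_snoc[OF deq(1), of p "snd u"] mk_snoc[OF deq(1), of p "snd v"] by simp
qed

lemma th1_cong:
  assumes r: "rcp C D P c r" "is_path P.T r (Inr d)" and t: "cross_path D E Q d e t" "cross_path D E Q d e t'"
    and pr: "prov_eq Q.T t t'"
  shows "inst_eq C E R c (th1 r t) (th1 r t')"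
proof -
  let ?p = "rsym r" and ?g = "rtail r"
  have y: "cross_path D E Q (ptgt P ?p) e (preQ ?p ?g t)" "cross_path D E Q (ptgt P ?p) e (preQ ?p ?g t')"
    using preQ_cross[OF r] t by auto
  have ch: "is_chain D (ptgt P ?p) ?g d" using P.rcp_path_iff[OF r(1)] r(2) by simp
  have "prov_eq Q.T (Inl d, snd t) (Inl d, snd t')" using pr t by (auto simp: cross_path_def) (metis prod.collapse)
  from prov_pre_path[OF this, of "Inl (ptgt P ?p)" "map Inl ?g"] ch
  have "prov_eq Q.T (preQ ?p ?g t) (preQ ?p ?g t')" by (simp add: preQ_def)
  then have "prov_eq Q.T (NFQ (ptgt P ?p) (preQ ?p ?g t)) (NFQ (ptgt P ?p) (preQ ?p ?g t'))"
    using NFQ[OF y(1)] NFQ[OF y(2)] by (meson prov_eq.sym prov_eq.trans)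
  then have "inst_eq D E Q (ptgt P ?p) (NFQ (ptgt P ?p) (preQ ?p ?g t)) (NFQ (ptgt P ?p) (preQ ?p ?g t'))"
    using NFQ[OF y(1)] NFQ[OF y(2)] Q.conserv by blast
  from L2[OF this] rcp_dec[OF r(1)] show ?thesis unfolding th1_def by auto
qed

definition appE :: "('s, 'x + 'y + 'z) path \<Rightarrow> 'z list \<Rightarrow> ('s, 'x + 'y + 'z) path" where
  "appE t h = (fst t, snd t @ map (Inr \<circ> Inr) h)"

lemma th1_ext:
  assumes r: "rcp C D P c r" "is_path P.T r (Inr d)" and t: "cross_path D E Q d e' t" and h: "is_chain E e' h e"
  shows "inst_eq C E R c (th1 r (appE t h)) (appE (th1 r t) h)"
proof -
  let ?p = "rsym r" and ?g = "rtail r"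
  have y: "cross_path D E Q (ptgt P ?p) e' (preQ ?p ?g t)" using preQ_cross[OF r t] .
  note n = NFQ[OF y]
  have pn: "is_path Q.T (NFQ (ptgt P ?p) (preQ ?p ?g t)) (Inr e')"
    using Q.prov_same_tgt[of "preQ ?p ?g t" _ "Inr e'"] n y by (auto simp: cross_path_def)
  have th: "cross_path D E Q d e (appE t h)" using t h by (auto simp: cross_path_def appE_def is_path_def chain_append)
  have y2: "cross_path D E Q (ptgt P ?p) e (preQ ?p ?g (appE t h))" using preQ_cross[OF r th] .
  note n2 = NFQ[OF y2]
  obtain z where z: "NFQ (ptgt P ?p) (preQ ?p ?g t) = (Inl (ptgt P ?p), z)"
    using rcp_dec[OF conjunct1[OF n]] by auto
  have "prov_eq Q.T (Inl (ptgt P ?p), snd (preQ ?p ?g t)) (Inl (ptgt P ?p), z)"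
    using n z by (simp add: preQ_def)
  from prov_post_path[OF this, of "Inr e'" "map (Inr \<circ> Inr) h" "Inr e"] y h
  have A: "prov_eq Q.T (Inl (ptgt P ?p), snd (preQ ?p ?g t) @ map (Inr \<circ> Inr) h) (Inl (ptgt P ?p), z @ map (Inr \<circ> Inr) h)"
    by (simp add: cross_path_def is_path_def preQ_def)
  have B: "preQ ?p ?g (appE t h) = (Inl (ptgt P ?p), snd (preQ ?p ?g t) @ map (Inr \<circ> Inr) h)"
    by (simp add: preQ_def appE_def)
  have C: "appE (NFQ (ptgt P ?p) (preQ ?p ?g t)) h = (Inl (ptgt P ?p), z @ map (Inr \<circ> Inr) h)"
    by (simp add: appE_def z)
  have "prov_eq Q.T (preQ ?p ?g (appE t h)) (appE (NFQ (ptgt P ?p) (preQ ?p ?g t)) h)"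
    using A B C by simp
  then have "prov_eq Q.T (NFQ (ptgt P ?p) (preQ ?p ?g (appE t h))) (appE (NFQ (ptgt P ?p) (preQ ?p ?g t)) h)"
    using n2 by (meson prov_eq.sym prov_eq.trans)
  moreover have "rcp D E Q (ptgt P ?p) (appE (NFQ (ptgt P ?p) (preQ ?p ?g t)) h)"
    using Q.rcp_snoc[OF conjunct1[OF n] pn h] by (simp add: appE_def)
  ultimately have "inst_eq D E Q (ptgt P ?p) (NFQ (ptgt P ?p) (preQ ?p ?g (appE t h))) (appE (NFQ (ptgt P ?p) (preQ ?p ?g t)) h)"
    using n2 Q.conserv by blast
  from L2[OF this] rcp_dec[OF r(1)] mk_snoc[OF conjunct1[OF n]] show ?thesis
    unfolding th1_def appE_def by auto
qed


lemma th1_appP: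
  assumes "rcp C D P c s"
  shows "th1 (fst s, snd s @ map (Inr \<circ> Inr) g) t = th1 s (x, map Inl g @ snd t)"
proof -
  obtain p g0 where "s = (Inl c, Inr (Inl p) # map (Inr \<circ> Inr) g0)" using assms by (auto simp: rcp_def)
  then show ?thesis by (simp add: th1_def rtail_def preQ_def o_def)
qed

lemma E1I: "(s0,s0') \<in> PEqs P \<Longrightarrow> q \<in> PFuns Q \<Longrightarrow> rcp C D P c s0 \<Longrightarrow> rcp C D P c s0' \<Longrightarrow>
  is_path P.T s0 (Inr (psrc Q q)) \<Longrightarrow> (th1 s0 (qpath q), th1 s0' (qpath q)) \<in> E1"
  unfolding E1_def by (rule image_eqI[where x="((s0,s0'),q)"]) auto

lemma L1:
  assumes "inst_eq C D P c s s'"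
  shows "is_path P.T s (Inr d) \<Longrightarrow> cross_path D E Q d e t \<Longrightarrow> inst_eq C E R c (th1 s t) (th1 s' t)"
  using assms
proof (induction arbitrary: d e t rule: inst_eq.induct)
  case (ax s s')
  have ps': "is_path P.T s' (Inr d)"
  proof -
    have "prov_eq P.T s s'" by (rule prov_eq.ax) (use ax in \<open>auto simp: total_def\<close>)
    then show ?thesis using P.prov_same_tgt ax by blast
  qed
  let ?r2 = "NFQ d t"
  note n = NFQ[OF ax(5)]
  let ?q = "rsym ?r2" and ?h = "rtail ?r2"
  have r2: "?r2 = (Inl d, Inr (Inl ?q) # map (Inr \<circ> Inr) ?h)" "?q \<in> PFuns Q" "psrc Q ?q = d"
    using rcp_dec[OF conjunct1[OF n]] by auto
  have pr2: "is_path Q.T ?r2 (Inr e)" using Q.prov_same_tgt[of t _ "Inr e"] n ax(5) by (auto simp: cross_path_def)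
  have ch: "is_chain E (ptgt Q ?q) ?h e" using Q.rcp_path_iff[OF conjunct1[OF n]] pr2 by simp
  have cr2: "cross_path D E Q d e ?r2" using pr2 r2(1) unfolding cross_path_def by (metis fst_conv)
  have app: "appE (qpath ?q) ?h = ?r2" using r2 by (simp add: appE_def qpath_def)
  have qc: "cross_path D E Q d (ptgt Q ?q) (qpath ?q)" using qpath_cross[OF r2(2)] r2(3) by simp
  have i1: "inst_eq C E R c (th1 s t) (th1 s ?r2)" using th1_cong[OF ax(2) ax(4) ax(5) cr2] n by blast
  have i6: "inst_eq C E R c (th1 s' ?r2) (th1 s' t)"
    using th1_cong[OF ax(3) ps' cr2 ax(5)] n by (blast intro: prov_eq.sym)
  have i2: "inst_eq C E R c (th1 s ?r2) (appE (th1 s (qpath ?q)) ?h)"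
    using th1_ext[OF ax(2) ax(4) qc ch] app by simp
  have i5: "inst_eq C E R c (appE (th1 s' (qpath ?q)) ?h) (th1 s' ?r2)"
    using th1_ext[OF ax(3) ps' qc ch] app by (simp add: inst_eq.sym)
  have t1: "rcp C E R c (th1 s (qpath ?q)) \<and> cross_path C E R c (ptgt Q ?q) (th1 s (qpath ?q))"
    using th1_lemma[OF ax(2) ax(4) qc] .
  have t2: "rcp C E R c (th1 s' (qpath ?q))" using th1_lemma[OF ax(3) ps' qc] by blast
  have i3: "inst_eq C E R c (th1 s (qpath ?q)) (th1 s' (qpath ?q))"
    using E1I[OF ax(1) r2(2) ax(2) ax(3)] ax(4) r2(3) t1 t2 by (intro inst_eq.ax) auto
  have i4: "inst_eq C E R c (appE (th1 s (qpath ?q)) ?h) (appE (th1 s' (qpath ?q)) ?h)"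
    using R.inst_app_path[OF i3 _ ch] t1 by (simp add: appE_def cross_path_def)
  show ?case using i1 i2 i3 i4 i5 i6 by (meson inst_eq.trans)
next
  case (refl s)
  then show ?case using th1_lemma[OF refl(1) refl(2) refl(3)] by (blast intro: inst_eq.refl)
next
  case (sym s s')
  have "is_path P.T s (Inr d)" using P.inst_sound[OF sym(1)] sym(3) P.prov_same_tgt prov_eq.sym by blast
  then show ?case using sym.IH[OF _ sym(4)] by (blast intro: inst_eq.sym)
next
  case (trans s s' s'')
  have "is_path P.T s' (Inr d)" using P.inst_sound[OF trans(1)] trans(5) P.prov_same_tgt by blast
  then show ?case using trans.IH(1)[OF trans(5,6)] trans.IH(2)[OF _ trans(6)] by (blast intro: inst_eq.trans)
next
  case (app s s' d0 g)
  have rs: "rcp C D P c s" "rcp C D P c s'" using P.inst_rcp[OF app(1)] by auto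
  have dd: "d = ftgt D g" using app(2,3,4,6) by (auto simp: is_path_def chain_snoc)
  let ?t = "(Inl d0, Inl g # snd t) :: ('sd+'se,'fd+'fq+'fe) path"
  have ct: "cross_path D E Q d0 e ?t" using app(3,4,7) dd P.fsrcD[OF app(3)] by (auto simp: cross_path_def is_path_def)
  have "inst_eq C E R c (th1 s ?t) (th1 s' ?t)" using app.IH[OF app(2) ct] .
  then show ?case using th1_appP[OF rs(1), of "[g]" t "Inl d0"] th1_appP[OF rs(2), of "[g]" t "Inl d0"] by simp
next
  case (deq s d0 u v)
  obtain d1 where uv: "is_path D u d1" "is_path D v d1" "fst v = d0"
    using P.wfD deq(3,4) by (fastforce simp: catpres_wf_def)
  have "is_chain D d0 (snd u) d1" using uv(1) deq(4) by (simp add: is_path_def)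
  from P.path_snoc_D[OF deq(2) this] have "is_path P.T (fst s, snd s @ map (Inr \<circ> Inr) (snd u)) (Inr d1)" .
  then have dd: "d = d1" using deq(5) unfolding is_path_def by (metis chain_tgt_unique sum.inject(2))
  have "prov_eq D u v" using deq(3) by (rule prov_eq.ax)
  then have "prov_eq Q.T (emb_l u) (emb_l v)" by (rule prov_emb_l)
  then have pe: "prov_eq Q.T (Inl d0, map Inl (snd u)) (Inl d0, map Inl (snd v))" using deq(4) uv by (simp add: emb_l_def)
  have pt: "is_path Q.T (Inl d0, map Inl (snd u)) (Inl d1)" using uv deq(4) by (auto simp: is_path_def)
  have tc: "is_chain Q.T (Inl d1) (snd t) (Inr e)" using deq(6) dd by (auto simp: cross_path_def is_path_def)
  have pr: "prov_eq Q.T (Inl d0, map Inl (snd u) @ snd t) (Inl d0, map Inl (snd v) @ snd t)"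
    using prov_post_path[OF pe pt tc] .
  have c1: "cross_path D E Q d0 e (Inl d0, map Inl (snd u) @ snd t)" using pt tc
    by (auto simp: cross_path_def is_path_def chain_append intro!: exI[of _ "Inl d1"])
  have c2: "cross_path D E Q d0 e (Inl d0, map Inl (snd v) @ snd t)" using pr c1 Q.prov_same_tgt
    by (auto simp: cross_path_def)
  have "inst_eq C E R c (th1 s (Inl d0, map Inl (snd u) @ snd t)) (th1 s (Inl d0, map Inl (snd v) @ snd t))"
    using th1_cong[OF deq(1,2) c1 c2 pr] .
  then show ?case using th1_appP[OF deq(1), of "snd u" t "Inl d0"] th1_appP[OF deq(1), of "snd v" t "Inl d0"] by simp
qed

end


lemma path_tgt_chain: "is_chain X s xs t \<Longrightarrow> path_tgt X (s, xs) = t"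
proof (induction xs arbitrary: t rule: rev_induct)
  case Nil then show ?case by (simp add: path_tgt_def)
next
  case (snoc f xs) then show ?case by (auto simp: path_tgt_def chain_snoc)
qed

definition dec :: "('x + 'y + 'z) list \<Rightarrow> 'x list \<times> 'y \<times> 'z list" where
  "dec xs = (map projl (takeWhile isl xs), projl (projr (hd (dropWhile isl xs))),
             map (projr \<circ> projr) (tl (dropWhile isl xs)))"

lemma dec_simp[simp]: "dec (map Inl x @ Inr (Inl i) # map (Inr \<circ> Inr) h) = (x, i, h)"
  by (induction x) (auto simp: dec_def o_def)

context compo begin

lemma th_congP:
  assumes s: "cross_path C D P c d s" "cross_path C D P c d s'" and pr: "prov_eq P.T s s'"
    and t: "cross_path D E Q d e t"
  shows "inst_eq C E R c (th c s t) (th c s' t)"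
proof -
  note n1 = NFP[OF s(1)] and n2 = NFP[OF s(2)]
  have "prov_eq P.T (NFP c s) (NFP c s')" using n1 n2 pr by (meson prov_eq.sym prov_eq.trans)
  then have i: "inst_eq C D P c (NFP c s) (NFP c s')" using n1 n2 P.conserv by blast
  have "is_path P.T (NFP c s) (Inr d)" using P.prov_same_tgt[of s _ "Inr d"] n1 s(1) by (auto simp: cross_path_def)
  from L1[OF i this t] show ?thesis by (simp add: th_def)
qed

lemma th_congQ:
  assumes s: "cross_path C D P c d s" and t: "cross_path D E Q d e t" "cross_path D E Q d e t'"
    and pr: "prov_eq Q.T t t'"
  shows "inst_eq C E R c (th c s t) (th c s t')"
proof -
  note n1 = NFP[OF s(1)]
  have "is_path P.T (NFP c s) (Inr d)" using P.prov_same_tgt[of s _ "Inr d"] n1 s(1) by (auto simp: cross_path_def)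
  from th1_cong[OF conjunct1[OF n1] this t pr] show ?thesis by (simp add: th_def)
qed

lemma th_shift:
  assumes s: "cross_path C D P c d s" and g: "is_chain D d g d'" and t: "cross_path D E Q d' e t"
  shows "inst_eq C E R c (th c (appE s g) t) (th c s (Inl d, map Inl g @ snd t))"
proof -
  note n1 = NFP[OF s(1)]
  have sg: "cross_path C D P c d' (appE s g)"
  proof -
    have "is_path P.T s (Inr d)" "fst s = Inl c" using s by (auto simp: cross_path_def)
    from P.path_snoc_D[OF this(1) g] this(2) show ?thesis by (simp add: cross_path_def appE_def)
  qed
  note n2 = NFP[OF sg]
  have p1: "is_path P.T (NFP c s) (Inr d)" using P.prov_same_tgt[of s _ "Inr d"] n1 s(1) by (auto simp: cross_path_def)
  obtain z where z: "NFP c s = (Inl c, z)" using rcp_dec[OF conjunct1[OF n1]] by auto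
  have fs: "fst s = Inl c" using s by (auto simp: cross_path_def)
  have "prov_eq P.T (Inl c, snd s) (Inl c, z)" using n1 z fs by (metis prod.collapse)
  from prov_post_path[OF this, of "Inr d" "map (Inr \<circ> Inr) g" "Inr d'"] s g
  have "prov_eq P.T (appE s g) (appE (NFP c s) g)" by (simp add: appE_def z fs cross_path_def is_path_def)
  then have "prov_eq P.T (NFP c (appE s g)) (appE (NFP c s) g)" using n2 by (meson prov_eq.sym prov_eq.trans)
  moreover have "rcp C D P c (appE (NFP c s) g)" using P.rcp_snoc[OF conjunct1[OF n1] p1 g] by (simp add: appE_def)
  ultimately have i: "inst_eq C D P c (NFP c (appE s g)) (appE (NFP c s) g)" using n2 P.conserv by blast
  have "is_path P.T (NFP c (appE s g)) (Inr d')" using P.prov_same_tgt[of "appE s g" _ "Inr d'"] n2 sg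
    by (auto simp: cross_path_def)
  from L1[OF i this t] have "inst_eq C E R c (th1 (NFP c (appE s g)) t) (th1 (appE (NFP c s) g) t)" .
  then show ?thesis using th1_appP[OF conjunct1[OF n1], of g t "Inl d"] by (simp add: th_def appE_def)
qed

abbreviation "crel c e \<equiv> comp_rel D PP QQ c e"
abbreviation "car c e \<equiv> comp_carrier D PP QQ c e"
abbreviation "cgen c e \<equiv> comp_gen D PP QQ c e"

lemma crel_sym: "(x,y) \<in> crel c e \<Longrightarrow> (y,x) \<in> crel c e"
proof -
  have "sym (Id_on (car c e) \<union> cgen c e \<union> (cgen c e)\<inverse>)" by (auto simp: sym_def)
  then have "sym (crel c e)" unfolding comp_rel_def by (rule sym_rtrancl)
  then show "(x,y) \<in> crel c e \<Longrightarrow> (y,x) \<in> crel c e" unfolding sym_def by blast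
qed

lemma crel_trans: "(x,y) \<in> crel c e \<Longrightarrow> (y,z) \<in> crel c e \<Longrightarrow> (x,z) \<in> crel c e"
  unfolding comp_rel_def by (rule rtrancl_trans)

lemma crel_refl: "(x,x) \<in> crel c e" unfolding comp_rel_def by simp

lemma crel_class: "(x,y) \<in> crel c e \<Longrightarrow> crel c e `` {x} = crel c e `` {y}"
  using crel_sym crel_trans by blast

lemma gen_crel: "(x,y) \<in> cgen c e \<Longrightarrow> (x,y) \<in> crel c e"
  unfolding comp_rel_def by auto

lemma class_eqD: "crel c e `` {x} = crel c e `` {y} \<Longrightarrow> (x,y) \<in> crel c e"
  using crel_refl crel_sym by blast

definition img where
  "img u w z = (fst z, act PP u (fst z, []) (fst (snd z)), act QQ (fst z, []) w (snd (snd z)))"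

lemma car_img:
  assumes "z \<in> car c e" "is_path C u c" "is_path E w e'" "fst w = e"
  shows "img u w z \<in> car (fst u) e'"
proof -
  obtain d a b where z: "z = (d,a,b)" "d \<in> Sorts D" "a \<in> el PP c d" "b \<in> el QQ d e"
    using assms(1) by (auto simp: comp_carrier_def)
  have pd: "is_path D (d,[]) d" using z by (simp add: is_path_def)
  have 1: "act PP u (d,[]) a \<in> el PP (fst u) d" using prof_act_in[OF P.prof assms(2) pd] z by simp
  have 2: "act QQ (d,[]) w b \<in> el QQ d e'" using prof_act_in[OF Q.prof pd assms(3)] z assms(4) by simp
  show ?thesis using z 1 2 by (auto simp: comp_carrier_def img_def)
qed

lemma img_gen:
  assumes xy: "(x,y) \<in> cgen c e" and u: "is_path C u c" and w: "is_path E w e'" "fst w = e"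
  shows "(img u w x, img u w y) \<in> cgen (fst u) e'"
proof -
  obtain d d' g a b where xy': "x = (d, a, act QQ (d,g) (e,[]) b)" "y = (d', act PP (c,[]) (d,g) a, b)"
    "is_chain D d g d'" "a \<in> el PP c d" "b \<in> el QQ d' e"
    using xy by (auto simp: comp_gen_def)
  have sd: "d \<in> Sorts D" "d' \<in> Sorts D" using xy'(3) by (auto dest: chain_src chain_tgt_sort)
  have se: "e \<in> Sorts E" "c \<in> Sorts C" using prof_sorts[OF Q.prof xy'(5)] prof_sorts[OF P.prof xy'(4)] by auto
  obtain c' us where uu: "u = (c', us)" "is_chain C c' us c" using u by (cases u) (auto simp: is_path_def)
  obtain ws where ww: "w = (e, ws)" "is_chain E e ws e'" using w by (cases w) (auto simp: is_path_def)
  let ?a2 = "act PP u (d,[]) a" and ?b2 = "act QQ (d',[]) w b"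
  have a2: "?a2 \<in> el PP c' d" using prof_act_in[OF P.prof u, of "(d,[])" d a] xy' sd uu by (auto simp: is_path_def)
  have b2: "?b2 \<in> el QQ d' e'" using prof_act_in[OF Q.prof _ w(1), of "(d',[])" d' b] xy' sd ww by (auto simp: is_path_def)
  have swQ: "act QQ (d,[]) w (act QQ (d,g) (e,[]) b) = act QQ (d,g) (e',[]) ?b2"
    using prof_swap[OF Q.prof xy'(3) ww(2) xy'(5)] ww by simp
  have swP: "act PP u (d',[]) (act PP (c,[]) (d,g) a) = act PP (c',[]) (d,g) ?a2"
    using prof_swap[OF P.prof uu(2) xy'(3) xy'(4)] uu by simp
  have "img u w x = (d, ?a2, act QQ (d,g) (e',[]) ?b2)" using xy'(1) swQ by (simp add: img_def)
  moreover have "img u w y = (d', act PP (fst u,[]) (d,g) ?a2, ?b2)" using xy'(2) swP uu by (simp add: img_def)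
  ultimately show ?thesis using xy'(3) a2 b2 uu unfolding comp_gen_def by auto
qed

lemma img_crel:
  assumes xy: "(x,y) \<in> crel c e" and u: "is_path C u c" and w: "is_path E w e'" "fst w = e"
  shows "(img u w x, img u w y) \<in> crel (fst u) e'"
  using xy unfolding comp_rel_def
proof (induction rule: rtrancl_induct)
  case base then show ?case by simp
next
  case (step y z)
  from step(2) consider "y = z" | "(y,z) \<in> cgen c e" | "(z,y) \<in> cgen c e" by auto
  then show ?case
  proof cases
    case 1 then show ?thesis using step(3) by simp
  next
    case 2 then show ?thesis using step(3) img_gen[OF _ u w] gen_crel unfolding comp_rel_def
      by (meson rtrancl_trans)
  next
    case 3
    then have "(img u w y, img u w z) \<in> crel (fst u) e'" using img_gen[OF _ u w] gen_crel crel_sym by blast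
    then show ?thesis using step(3) unfolding comp_rel_def by (meson rtrancl_trans)
  qed
qed

lemma act_comp:
  assumes z: "z \<in> car c e" and u: "is_path C u c" and w: "is_path E w e'" "fst w = e"
  shows "act (prof_comp C D E PP QQ) u w (crel c e `` {z}) = crel (fst u) e' `` {img u w z}"
proof -
  have pt: "path_tgt E w = e'" using w by (cases w) (auto simp: is_path_def path_tgt_chain)
  have "act (prof_comp C D E PP QQ) u w (crel c e `` {z}) = (\<Union>x\<in>crel c e `` {z}. crel (fst u) e' `` {img u w x})"
    by (simp add: prof_comp_def pt img_def)
  also have "\<dots> = crel (fst u) e' `` {img u w z}"
  proof
    show "(\<Union>x\<in>crel c e `` {z}. crel (fst u) e' `` {img u w x}) \<subseteq> crel (fst u) e' `` {img u w z}"
      using img_crel[OF _ u w] crel_class by blast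
    show "crel (fst u) e' `` {img u w z} \<subseteq> (\<Union>x\<in>crel c e `` {z}. crel (fst u) e' `` {img u w x})"
      using crel_refl by blast
  qed
  finally show ?thesis .
qed

lemma el_comp: "el (prof_comp C D E PP QQ) c e = (\<lambda>z. crel c e `` {z}) ` car c e"
  by (auto simp: prof_comp_def quotient_def)


definition zPsi :: "'sc \<Rightarrow> 'se \<Rightarrow> ('sc+'se,'fc+nat+'fe) path \<Rightarrow> 'sd \<times> 'a \<times> 'b" where
  "zPsi c e t = (case dec (snd t) of (x,i,h) \<Rightarrow>
     (ptgt P (fst (L!i)), P.elt c (ptgt P (fst (L!i))) (Inl c, map Inl x @ [Inr (Inl (fst (L!i)))]),
      Q.elt (ptgt P (fst (L!i))) e (Inl (ptgt P (fst (L!i))), Inr (Inl (snd (L!i))) # map (Inr \<circ> Inr) h)))"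

definition Psi where "Psi c e t = crel c e `` {zPsi c e t}"

lemma zPsi_simp: "L ! i = (p,q) \<Longrightarrow> zPsi c e (s0, map Inl x @ Inr (Inl i) # map (Inr \<circ> Inr) h) =
  (ptgt P p, P.elt c (ptgt P p) (Inl c, map Inl x @ [Inr (Inl p)]),
   Q.elt (ptgt P p) e (Inl (ptgt P p), Inr (Inl q) # map (Inr \<circ> Inr) h))"
  by (simp add: zPsi_def)

lemma R_cross_dec:
  assumes "cross_path C E R c e t"
  shows "\<exists>x i h p q. t = (Inl c, map Inl x @ Inr (Inl i) # map (Inr \<circ> Inr) h) \<and> i < length L \<and>
     L ! i = (p,q) \<and> is_chain C c x (psrc P p) \<and> is_chain E (ptgt Q q) h e \<and>
     p \<in> PFuns P \<and> q \<in> PFuns Q \<and> ptgt P p = psrc Q q"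
proof -
  obtain x i h where t: "t = (Inl c, map Inl x @ Inr (Inl i) # map (Inr \<circ> Inr) h)"
    "is_chain C c x (psrc R i)" "i \<in> PFuns R" "is_chain E (ptgt R i) h e"
    using assms by (cases t) (auto simp: cross_path_def is_path_def chain_total_X)
  obtain p q where pq: "L ! i = (p,q)" by fastforce
  have il: "i < length L" using t(3) by simp
  have "(p,q) \<in> Sset" using nth_S[of i] t(3) pq by simp
  then have S: "p \<in> PFuns P" "q \<in> PFuns Q" "ptgt P p = psrc Q q" by (auto simp: Sset_def)
  have c2: "is_chain C c x (psrc P p)" using t(2) pq by simp
  have c4: "is_chain E (ptgt Q q) h e" using t(4) pq by simp
  show ?thesis using t(1) il pq c2 c4 S by blast
qed

lemma sp_cross: "is_chain C c x (psrc P p) \<Longrightarrow> p \<in> PFuns P \<Longrightarrow>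
    cross_path C D P c (ptgt P p) (Inl c, map Inl x @ [Inr (Inl p)])"
proof -
  assume a: "is_chain C c x (psrc P p)" "p \<in> PFuns P"
  have "is_chain (total C D P) (Inl c) (map Inl x @ Inr (Inl p) # map (Inr \<circ> Inr) []) (Inr (ptgt P p))"
    unfolding chain_total_X
    by (rule exI[of _ x], rule exI[of _ p], rule exI[of _ "[]"]) (use a P.ptgt_sort in auto)
  then show ?thesis by (simp add: cross_path_def is_path_def)
qed

lemma tq_cross: "is_chain E (ptgt Q q) h e \<Longrightarrow> q \<in> PFuns Q \<Longrightarrow>
    cross_path D E Q (psrc Q q) e (Inl (psrc Q q), Inr (Inl q) # map (Inr \<circ> Inr) h)"
  using Q.psrc_sort by (auto simp: cross_path_def is_path_def)

lemma zPsi_car: "cross_path C E R c e t \<Longrightarrow> zPsi c e t \<in> car c e"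
proof -
  assume "cross_path C E R c e t"
  from R_cross_dec[OF this] obtain x i h p q where a:
    "t = (Inl c, map Inl x @ Inr (Inl i) # map (Inr \<circ> Inr) h)" "L ! i = (p,q)" "is_chain C c x (psrc P p)"
    "is_chain E (ptgt Q q) h e" "p \<in> PFuns P" "q \<in> PFuns Q" "ptgt P p = psrc Q q" by blast
  have 1: "P.elt c (ptgt P p) (Inl c, map Inl x @ [Inr (Inl p)]) \<in> el PP c (ptgt P p)"
    using P.elt_in[OF sp_cross[OF a(3,5)]] by blast
  have 2: "Q.elt (ptgt P p) e (Inl (ptgt P p), Inr (Inl q) # map (Inr \<circ> Inr) h) \<in> el QQ (ptgt P p) e"
    using Q.elt_in[OF tq_cross[OF a(4,6)]] a(7) by simp
  show ?thesis using a(1,2) 1 2 P.ptgt_sort[OF a(5)] by (simp add: zPsi_simp comp_carrier_def)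
qed

lemma Psi_nat:
  assumes r: "cross_path C E R c e r" and u: "is_path C u c" and w: "is_path E w e'" "fst w = e"
  shows "Psi (fst u) e' (ext u r w) = act (prof_comp C D E PP QQ) u w (Psi c e r)"
proof -
  from R_cross_dec[OF r] obtain x i h p q where a:
    "r = (Inl c, map Inl x @ Inr (Inl i) # map (Inr \<circ> Inr) h)" "L ! i = (p,q)" "is_chain C c x (psrc P p)"
    "is_chain E (ptgt Q q) h e" "p \<in> PFuns P" "q \<in> PFuns Q" "ptgt P p = psrc Q q" by blast
  let ?d = "ptgt P p"
  let ?sp = "(Inl c, map Inl x @ [Inr (Inl p)]) :: ('sc+'sd,'fc+'fp+'fd) path"
  let ?tq = "(Inl ?d, Inr (Inl q) # map (Inr \<circ> Inr) h) :: ('sd+'se,'fd+'fq+'fe) path"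
  have sp: "cross_path C D P c ?d ?sp" using sp_cross[OF a(3,5)] .
  have tq: "cross_path D E Q ?d e ?tq" using tq_cross[OF a(4,6)] a(7) by simp
  have pd: "is_path D (?d,[]) ?d" using P.ptgt_sort[OF a(5)] by (simp add: is_path_def)
  have e1: "ext u r w = (Inl (fst u), map Inl (snd u @ x) @ Inr (Inl i) # map (Inr \<circ> Inr) (h @ snd w))"
    using a(1) by (simp add: ext_def)
  have P1: "P.elt (fst u) ?d (Inl (fst u), map Inl (snd u @ x) @ [Inr (Inl p)]) = act PP u (?d,[]) (P.elt c ?d ?sp)"
    using P.elt_nat[OF u pd, of ?sp] sp by (simp add: ext_def)
  have Q1: "Q.elt ?d e' (Inl ?d, Inr (Inl q) # map (Inr \<circ> Inr) (h @ snd w)) = act QQ (?d,[]) w (Q.elt ?d e ?tq)"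
    using Q.elt_nat[OF pd w(1), of ?tq] tq w(2) by (simp add: ext_def)
  have z: "zPsi (fst u) e' (ext u r w) = (?d, P.elt (fst u) ?d (Inl (fst u), map Inl (snd u @ x) @ [Inr (Inl p)]),
      Q.elt ?d e' (Inl ?d, Inr (Inl q) # map (Inr \<circ> Inr) (h @ snd w)))"
    unfolding e1 by (rule zPsi_simp[OF a(2)])
  have z2: "zPsi c e r = (?d, P.elt c ?d ?sp, Q.elt ?d e ?tq)" unfolding a(1) by (rule zPsi_simp[OF a(2)])
  have "zPsi (fst u) e' (ext u r w) = img u w (zPsi c e r)"
    unfolding z z2 img_def using P1 Q1 by simp
  then show ?thesis using act_comp[OF zPsi_car[OF r] u w] by (simp add: Psi_def)
qed

lemma Psi_mk:
  assumes r: "rcp D E Q d r" "is_path Q.T r (Inr e)" and p: "p \<in> PFuns P" "ptgt P p = d"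
  shows "Psi (psrc P p) e (mk p r) = crel (psrc P p) e `` {(d, P.elt (psrc P p) d (Inl (psrc P p), [Inr (Inl p)]), Q.elt d e r)}"
proof -
  have q: "rsym r \<in> PFuns Q" "psrc Q (rsym r) = d" "r = (Inl d, Inr (Inl (rsym r)) # map (Inr \<circ> Inr) (rtail r))"
    using rcp_dec[OF r(1)] by auto
  have S: "(p, rsym r) \<in> Sset" using p q by (auto simp: Sset_def)
  note i = idx[OF S]
  have "mk p r = (Inl (psrc P p), map Inl [] @ Inr (Inl (idx (p, rsym r))) # map (Inr \<circ> Inr) (rtail r))"
    by (simp add: mk_def)
  then have "zPsi (psrc P p) e (mk p r) = (ptgt P p, P.elt (psrc P p) (ptgt P p) (Inl (psrc P p), map Inl [] @ [Inr (Inl p)]),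
     Q.elt (ptgt P p) e (Inl (ptgt P p), Inr (Inl (rsym r)) # map (Inr \<circ> Inr) (rtail r)))"
    using zPsi_simp[OF conjunct2[OF i], of "psrc P p" e "Inl (psrc P p)" "[]" "rtail r"] by (simp add: mk_def)
  then show ?thesis unfolding Psi_def using p q(3)[symmetric] by simp
qed

lemma Psi_th1:
  assumes r: "rcp C D P c r" "is_path P.T r (Inr d)" and t: "cross_path D E Q d e t"
  shows "Psi c e (th1 r t) = crel c e `` {(d, P.elt c d r, Q.elt d e t)}"
proof -
  let ?p = "rsym r" and ?g = "rtail r"
  let ?dp = "ptgt P ?p"
  have rr: "r = (Inl c, Inr (Inl ?p) # map (Inr \<circ> Inr) ?g)" "?p \<in> PFuns P" "psrc P ?p = c"
    using rcp_dec[OF r(1)] by auto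
  have ch: "is_chain D ?dp ?g d" using P.rcp_path_iff[OF r(1)] r(2) by simp
  have y: "cross_path D E Q ?dp e (preQ ?p ?g t)" using preQ_cross[OF r t] .
  note n = NFQ[OF y]
  have pn: "is_path Q.T (NFQ ?dp (preQ ?p ?g t)) (Inr e)"
    using Q.prov_same_tgt[of "preQ ?p ?g t" _ "Inr e"] n y by (auto simp: cross_path_def)
  have 1: "Psi c e (th1 r t) = crel c e `` {(?dp, P.elt c ?dp (Inl c, [Inr (Inl ?p)]), Q.elt ?dp e (NFQ ?dp (preQ ?p ?g t)))}"
    using Psi_mk[OF conjunct1[OF n] pn rr(2) HOL.refl] rr(3) by (simp add: th1_def)
  have se: "e \<in> Sorts E" using t Q.cross_sorts by blast
  have pe: "is_path E (e,[]) e" using se by (simp add: is_path_def)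
  have pg: "is_path D (?dp, ?g) d" using ch by (simp add: is_path_def)
  have 2: "Q.elt ?dp e (NFQ ?dp (preQ ?p ?g t)) = act QQ (?dp, ?g) (e,[]) (Q.elt d e t)"
  proof -
    have "Q.elt ?dp e (NFQ ?dp (preQ ?p ?g t)) = Q.elt ?dp e (preQ ?p ?g t)"
      using n Q.elt_eq prov_eq.sym by metis
    also have "\<dots> = Q.elt ?dp e (ext (?dp, ?g) t (e,[]))" by (simp add: preQ_def ext_def)
    also have "\<dots> = act QQ (?dp, ?g) (e,[]) (Q.elt d e t)" using Q.elt_nat[OF pg pe] t by simp
    finally show ?thesis .
  qed
  have cs: "c \<in> Sorts C" using P.psrc_sort[OF rr(2)] rr(3) by simp
  have sp: "cross_path C D P c ?dp (Inl c, [Inr (Inl ?p)])" using sp_cross[of c "[]" ?p] rr cs by simp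
  have 3: "act PP (c,[]) (?dp, ?g) (P.elt c ?dp (Inl c, [Inr (Inl ?p)])) = P.elt c d r"
  proof -
    have pc: "is_path C (c,[]) c" using P.psrc_sort[OF rr(2)] rr(3) by (simp add: is_path_def)
    have "P.elt c d (ext (c,[]) (Inl c, [Inr (Inl ?p)]) (?dp, ?g)) = act PP (c,[]) (?dp, ?g) (P.elt c ?dp (Inl c, [Inr (Inl ?p)]))"
      using P.elt_nat[OF pc pg] sp by simp
    moreover have "ext (c,[]) (Inl c, [Inr (Inl ?p)]) (?dp, ?g) = r" using rr(1) by (simp add: ext_def)
    ultimately show ?thesis by simp
  qed
  have gen: "((?dp, P.elt c ?dp (Inl c, [Inr (Inl ?p)]), act QQ (?dp, ?g) (e,[]) (Q.elt d e t)),
              (d, act PP (c,[]) (?dp, ?g) (P.elt c ?dp (Inl c, [Inr (Inl ?p)])), Q.elt d e t)) \<in> cgen c e"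
    unfolding comp_gen_def using ch P.elt_in[OF sp] Q.elt_in[OF t] by blast
  show ?thesis using 1 2 3 crel_class[OF gen_crel[OF gen]] by simp
qed

lemma Psi_th:
  assumes s: "cross_path C D P c d s" and t: "cross_path D E Q d e t"
  shows "Psi c e (th c s t) = crel c e `` {(d, P.elt c d s, Q.elt d e t)}"
proof -
  note n1 = NFP[OF s]
  have "is_path P.T (NFP c s) (Inr d)" using P.prov_same_tgt[of s _ "Inr d"] n1 s by (auto simp: cross_path_def)
  from Psi_th1[OF conjunct1[OF n1] this t] P.elt_eq[OF conjunct2[OF n1]] show ?thesis by (simp add: th_def)
qed

end


lemma chain_mapInl: "is_chain (total C D P) (Inl c) (map Inl x) t \<Longrightarrow> \<exists>c'. t = Inl c' \<and> is_chain C c x c'"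
  by (induction x arbitrary: c) auto

context compo begin

definition unl :: "('sc+'se, 'fc+nat+'fe) path \<Rightarrow> ('sc,'fc) path" where
  "unl a = (projl (fst a), map projl (snd a))"
definition unr :: "('sc+'se, 'fc+nat+'fe) path \<Rightarrow> ('se,'fe) path" where
  "unr a = (projr (fst a), map (projr \<circ> projr) (snd a))"

lemma unl_simp[simp]: "unl (Inl c, map Inl x) = (c, x)" by (simp add: unl_def o_def)
lemma unr_simp[simp]: "unr (Inr e, map (Inr \<circ> Inr) h) = (e, h)" by (simp add: unr_def o_def)

lemma RT_L: "is_path R.T (Inl c, xs) t \<Longrightarrow>
   (\<exists>c' x. t = Inl c' \<and> xs = map Inl x \<and> is_chain C c x c') \<or> (\<exists>e. t = Inr e \<and> cross_path C E R c e (Inl c, xs))"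
  by (cases t) (auto simp: is_path_def chain_total_L cross_path_def)

lemma RT_R: "is_path R.T (Inr e, xs) t \<Longrightarrow> \<exists>h e'. t = Inr e' \<and> xs = map (Inr \<circ> Inr) h \<and> is_chain E e h e'"
  by (auto simp: is_path_def chain_total_R)

lemma R_prov_tgt: "prov_eq R.T a b \<Longrightarrow> is_path R.T b t \<Longrightarrow> is_path R.T a t \<and> fst a = fst b"
  using R.prov_same_tgt prov_eq.sym by metis

lemma Psi_PEq:
  assumes "(a,b) \<in> PEqs R"
  shows "\<exists>c e. cross_path C E R c e a \<and> cross_path C E R c e b \<and> Psi c e a = Psi c e b"
proof -
  obtain c e where ce: "cross_path C E R c e a" "cross_path C E R c e b"
    using wfR assms unfolding profpres_wf_def by blast
  consider "(a,b) \<in> E1" | "(a,b) \<in> E2" | "(a,b) \<in> E3" using assms by auto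
  then have "Psi c e a = Psi c e b"
  proof cases
    case 1
    then obtain s0 s0' q c0 where a: "a = th1 s0 (qpath q)" "b = th1 s0' (qpath q)" "(s0,s0') \<in> PEqs P"
        "q \<in> PFuns Q" "rcp C D P c0 s0" "rcp C D P c0 s0'" "is_path P.T s0 (Inr (psrc Q q))"
        unfolding E1_def by auto
    have pr: "prov_eq P.T s0 s0'" by (rule prov_eq.ax) (use a in \<open>auto simp: total_def\<close>)
    have a7: "is_path P.T s0' (Inr (psrc Q q))" using P.prov_same_tgt pr a(7) by blast
    note qc = qpath_cross[OF a(4)]
    have c0: "cross_path C E R c0 (ptgt Q q) a" using th1_lemma[OF a(5) a(7) qc] a(1) by blast
    have cc: "c0 = c" "ptgt Q q = e" using c0 ce(1) unfolding cross_path_def is_path_def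
      by (auto dest: chain_tgt_unique)
    show ?thesis using Psi_th1[OF a(5) a(7) qc] Psi_th1[OF a(6) a7 qc] a(1,2) P.elt_eq[OF pr] cc by simp
  next
    case 2
    then obtain t t' p where a: "a = mk p t" "b = mk p t'" "(t,t') \<in> PEqs Q" "p \<in> PFuns P"
        "rcp D E Q (ptgt P p) t" "rcp D E Q (ptgt P p) t'"
        unfolding E2_def by auto
    have pr: "prov_eq Q.T t t'" by (rule prov_eq.ax) (use a in \<open>auto simp: total_def\<close>)
    obtain d0 e0 where "cross_path D E Q d0 e0 t" using Q.wfP a(3) unfolding profpres_wf_def by blast
    then have pt: "is_path Q.T t (Inr e0)" by (auto simp: cross_path_def)
    have pt': "is_path Q.T t' (Inr e0)" using Q.prov_same_tgt pr pt by blast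
    have c0: "cross_path C E R (psrc P p) e0 a" using mk_lemma[OF a(5) pt a(4)] a(1) by simp
    have cc: "psrc P p = c" "e0 = e" using c0 ce(1) unfolding cross_path_def is_path_def
      by (auto dest: chain_tgt_unique)
    show ?thesis using Psi_mk[OF a(5) pt a(4)] Psi_mk[OF a(6) pt' a(4)] a(1,2) Q.elt_eq[OF pr] cc by simp
  next
    case 3
    then obtain f i where a: "a = (Inl (fsrc C f), [Inl f, Inr (Inl i)])"
        "b = th1 (NFP (fsrc C f) (Inl (fsrc C f), [Inl f, Inr (Inl (fst (L ! i)))])) (qpath (snd (L ! i)))"
        "f \<in> Funs C" "i < length L" "ftgt C f = psrc P (fst (L ! i))"
        unfolding E3_def by auto
    obtain p q where pq: "L ! i = (p,q)" by fastforce
    have S: "p \<in> PFuns P" "q \<in> PFuns Q" "ptgt P p = psrc Q q" using nth_S[OF a(4)] pq by (auto simp: Sset_def)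
    have cc: "fsrc C f = c" "ptgt Q q = e" using ce(1) a(1) pq Q.ptgt_sort S(2)
      unfolding cross_path_def is_path_def by (auto dest: chain_tgt_unique)
    have sp: "cross_path C D P c (ptgt P p) (Inl c, map Inl [f] @ [Inr (Inl p)])"
      using sp_cross[of c "[f]" p] a(3,5) pq S cc P.wfC by (auto simp: catpres_wf_def)
    have qc: "cross_path D E Q (ptgt P p) (ptgt Q q) (qpath q)" using qpath_cross[OF S(2)] S(3) by simp
    have "Psi c e b = crel c e `` {(ptgt P p, P.elt c (ptgt P p) (Inl c, [Inl f, Inr (Inl p)]), Q.elt (ptgt P p) e (qpath q))}"
      using Psi_th[OF sp qc] a(2) pq cc by (simp add: th_def)
    moreover have "Psi c e a = crel c e `` {(ptgt P p, P.elt c (ptgt P p) (Inl c, [Inl f, Inr (Inl p)]), Q.elt (ptgt P p) e (qpath q))}"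
      using zPsi_simp[OF pq, of c e "Inl c" "[f]" "[]"] a(1) cc S(3) by (simp add: Psi_def qpath_def)
    ultimately show ?thesis by simp
  qed
  with ce show ?thesis by blast
qed


definition InvC where "InvC a b \<longleftrightarrow> (\<forall>c c'. fst a = Inl c \<longrightarrow> is_path R.T a (Inl c') \<longrightarrow> prov_eq C (unl a) (unl b))"
definition InvE where "InvE a b \<longleftrightarrow> (\<forall>e e'. fst a = Inr e \<longrightarrow> is_path R.T a (Inr e') \<longrightarrow> prov_eq E (unr a) (unr b))"
definition InvX where "InvX a b \<longleftrightarrow> (\<forall>c e. fst a = Inl c \<longrightarrow> is_path R.T a (Inr e) \<longrightarrow> Psi c e a = Psi c e b)"

lemma Psi_inv: "prov_eq R.T a b \<Longrightarrow> InvC a b \<and> InvE a b \<and> InvX a b"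
proof (induction rule: prov_eq.induct)
  case (ax a b)
  then consider "(a,b) \<in> (\<lambda>(u,v). (emb_l u, emb_l v)) ` Eqs C" | "(a,b) \<in> PEqs R"
      | "(a,b) \<in> (\<lambda>(u,v). (emb_r u, emb_r v)) ` Eqs E"
    by (simp only: total_def catpres.select_convs) blast
  then show ?case
  proof cases
    case 1
    then obtain u0 v0 where uv: "(u0,v0) \<in> Eqs C" "a = emb_l u0" "b = emb_l v0" by auto
    have "InvC a b" unfolding InvC_def using uv by (auto simp: emb_l_def unl_def o_def intro: prov_eq.ax)
    moreover have "InvE a b" unfolding InvE_def using uv by (simp add: emb_l_def)
    moreover have "InvX a b" unfolding InvX_def using uv by (auto simp: emb_l_def is_path_def dest!: chain_mapInl)
    ultimately show ?thesis by blast
  next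
    case 2
    from Psi_PEq[OF this] obtain c e where ce: "cross_path C E R c e a" "cross_path C E R c e b" "Psi c e a = Psi c e b" by blast
    have "InvC a b" unfolding InvC_def using ce unfolding cross_path_def is_path_def by (auto dest: chain_tgt_unique)
    moreover have "InvE a b" unfolding InvE_def using ce by (auto simp: cross_path_def)
    moreover have "InvX a b" unfolding InvX_def using ce unfolding cross_path_def is_path_def by (auto dest: chain_tgt_unique)
    ultimately show ?thesis by blast
  next
    case 3
    then obtain u0 v0 where uv: "(u0,v0) \<in> Eqs E" "a = emb_r u0" "b = emb_r v0" by auto
    have "fst u0 = fst v0" using Q.wfD uv(1) by (auto simp: catpres_wf_def)
    then have "InvE a b" unfolding InvE_def using uv
      by (auto simp: emb_r_def unr_def o_def) (metis prod.collapse prov_eq.ax)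
    moreover have "InvC a b" unfolding InvC_def using uv by (simp add: emb_r_def)
    moreover have "InvX a b" unfolding InvX_def using uv by (simp add: emb_r_def)
    ultimately show ?thesis by blast
  qed
next
  case (refl a t)
  have "InvC a a" unfolding InvC_def
  proof (intro allI impI)
    fix c c' assume "fst a = Inl c" "is_path R.T a (Inl c')"
    then obtain x where "a = (Inl c, map Inl x)" "is_chain C c x c'"
      using RT_L[of c "snd a" "Inl c'"] by (cases a) auto
    then show "prov_eq C (unl a) (unl a)" by (auto intro: prov_eq.refl simp: is_path_def)
  qed
  moreover have "InvE a a" unfolding InvE_def
  proof (intro allI impI)
    fix e e' assume "fst a = Inr e" "is_path R.T a (Inr e')"
    then obtain h where "a = (Inr e, map (Inr \<circ> Inr) h)" "is_chain E e h e'"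
      using RT_R[of e "snd a" "Inr e'"] by (cases a) auto
    then show "prov_eq E (unr a) (unr a)" by (auto intro: prov_eq.refl simp: is_path_def)
  qed
  ultimately show ?case by (simp add: InvX_def)
next
  case (sym a b)
  have "InvC b a" unfolding InvC_def
    using sym R_prov_tgt[OF sym(1)] by (auto simp: InvC_def intro: prov_eq.sym)
  moreover have "InvE b a" unfolding InvE_def
    using sym R_prov_tgt[OF sym(1)] by (auto simp: InvE_def intro: prov_eq.sym)
  moreover have "InvX b a" unfolding InvX_def
    using sym R_prov_tgt[OF sym(1)] by (auto simp: InvX_def)
  ultimately show ?case by blast
next
  case (trans a b w)
  have "InvC a w" unfolding InvC_def
  proof (intro allI impI)
    fix c c' assume h: "fst a = Inl c" "is_path R.T a (Inl c')"
    then have h2: "fst b = Inl c" "is_path R.T b (Inl c')" using R.prov_same_tgt[OF trans(1) h(2)] by auto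
    show "prov_eq C (unl a) (unl w)" using trans.IH h h2 unfolding InvC_def by (blast intro: prov_eq.trans)
  qed
  moreover have "InvE a w" unfolding InvE_def
  proof (intro allI impI)
    fix c c' assume h: "fst a = Inr c" "is_path R.T a (Inr c')"
    then have h2: "fst b = Inr c" "is_path R.T b (Inr c')" using R.prov_same_tgt[OF trans(1) h(2)] by auto
    show "prov_eq E (unr a) (unr w)" using trans.IH h h2 unfolding InvE_def by (blast intro: prov_eq.trans)
  qed
  moreover have "InvX a w" unfolding InvX_def
  proof (intro allI impI)
    fix c c' assume h: "fst a = Inl c" "is_path R.T a (Inr c')"
    then have h2: "fst b = Inl c" "is_path R.T b (Inr c')" using R.prov_same_tgt[OF trans(1) h(2)] by auto
    show "Psi c c' a = Psi c c' w" using trans.IH h h2 unfolding InvX_def by simp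
  qed
  ultimately show ?case by blast
next
  case (post s u s' v t f)
  have ss: "s' = s" using R.prov_paths[OF post(1)] by simp
  have pv: "is_path R.T (s,v) t" using R.prov_same_tgt[OF post(1) post(2)] ss by simp
  have IH: "InvC (s,u) (s,v)" "InvE (s,u) (s,v)" "InvX (s,u) (s,v)" using post.IH ss by auto
  consider (L) f0 where "f = Inl f0" | (M) i where "f = Inr (Inl i)" | (N) f0 where "f = Inr (Inr f0)"
    by (metis sum.exhaust)
  then show ?case
  proof cases
    case L
    have f0: "f0 \<in> Funs C" "t = Inl (fsrc C f0)" using post(3,4) L by auto
    obtain c where sc: "s = Inl c" using post(2) f0(2) RT_R by (cases s) fastforce+
    obtain x where x: "u = map Inl x" "is_chain C c x (fsrc C f0)" using RT_L[of c u t] post(2) sc f0(2) by auto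
    obtain y where y: "v = map Inl y" "is_chain C c y (fsrc C f0)" using RT_L[of c v t] pv sc f0(2) by auto
    have pc: "prov_eq C (c,x) (c,y)" using IH(1) post(2) sc x y f0 unfolding InvC_def by auto
    have pc2: "prov_eq C (c, x @ [f0]) (c, y @ [f0])" using prov_eq.post[OF pc _ f0(1)] x by (simp add: is_path_def)
    have e1: "(s, u @ [f]) = (Inl c, map Inl (x @ [f0]))" "(s', v @ [f]) = (Inl c, map Inl (y @ [f0]))"
      using sc ss x y L by auto
    have u1: "unl (s, u @ [f]) = (c, x @ [f0])" "unl (s', v @ [f]) = (c, y @ [f0])" unfolding e1 by (rule unl_simp)+
    have nx: "\<not> is_path R.T (s, u @ [f]) (Inr e)" for e unfolding e1 is_path_def fst_conv snd_conv
      using chain_mapInl[of C E R c "x @ [f0]" "Inr e"] by auto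
    show ?thesis unfolding InvC_def InvE_def InvX_def using u1 nx pc2 sc by auto
  next
    case M
    have i: "i < length L" "t = Inl (psrc R i)" using post(3,4) M by auto
    obtain p q where pq: "L ! i = (p,q)" by fastforce
    have S: "p \<in> PFuns P" "q \<in> PFuns Q" "ptgt P p = psrc Q q" using nth_S[OF i(1)] pq by (auto simp: Sset_def)
    obtain c where sc: "s = Inl c" using post(2) i(2) RT_R by (cases s) fastforce+
    obtain x where x: "u = map Inl x" "is_chain C c x (psrc P p)" using RT_L[of c u t] post(2) sc i(2) pq by auto
    obtain y where y: "v = map Inl y" "is_chain C c y (psrc P p)" using RT_L[of c v t] pv sc i(2) pq by auto
    have pc: "prov_eq C (c,x) (c,y)" using IH(1) post(2) sc x y i pq unfolding InvC_def by auto
    have pP: "prov_eq P.T (Inl c, map Inl x) (Inl c, map Inl y)" using prov_emb_l[OF pc] by (simp add: emb_l_def)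
    have pP2: "prov_eq P.T (Inl c, map Inl x @ [Inr (Inl p)]) (Inl c, map Inl y @ [Inr (Inl p)])"
      using prov_eq.post[OF pP, of "Inl (psrc P p)" "Inr (Inl p)"] x S by (simp add: is_path_def)
    have pn: "is_path R.T (s, u @ [f]) (Inr (ptgt Q q))"
      using post(2) i pq M Q.ptgt_sort[OF S(2)] by (simp add: is_path_def chain_snoc)
    have e1: "(s, u @ [f]) = (Inl c, map Inl x @ Inr (Inl i) # map (Inr \<circ> Inr) [])"
      "(s', v @ [f]) = (Inl c, map Inl y @ Inr (Inl i) # map (Inr \<circ> Inr) [])"
      using sc ss x y M by auto
    have "Psi c e (s, u @ [f]) = Psi c e (s', v @ [f])" for e
      unfolding e1 Psi_def zPsi_simp[OF pq] using P.elt_eq[OF pP2] by simp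
    moreover have "\<not> is_path R.T (s, u @ [f]) (Inl c')" for c' using pn unfolding is_path_def
      by (metis chain_tgt_unique sum.distinct(1))
    ultimately show ?thesis unfolding InvC_def InvE_def InvX_def using sc by auto
  next
    case N
    have f0: "f0 \<in> Funs E" "t = Inr (fsrc E f0)" using post(3,4) N by auto
    have se: "ftgt E f0 \<in> Sorts E" "fsrc E f0 \<in> Sorts E" using Q.wfD f0(1) by (auto simp: catpres_wf_def)
    show ?thesis
    proof (cases s)
      case (Inr e0)
      obtain h where h: "u = map (Inr \<circ> Inr) h" "is_chain E e0 h (fsrc E f0)" using RT_R[of e0 u t] post(2) Inr f0 by auto
      obtain h' where h': "v = map (Inr \<circ> Inr) h'" "is_chain E e0 h' (fsrc E f0)" using RT_R[of e0 v t] pv Inr f0 by auto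
      have pe: "prov_eq E (e0,h) (e0,h')" using IH(2) post(2) Inr h h' f0 unfolding InvE_def by auto
      have pe2: "prov_eq E (e0, h @ [f0]) (e0, h' @ [f0])" using prov_eq.post[OF pe _ f0(1)] h by (simp add: is_path_def)
      have e1: "(s, u @ [f]) = (Inr e0, map (Inr \<circ> Inr) (h @ [f0]))" "(s', v @ [f]) = (Inr e0, map (Inr \<circ> Inr) (h' @ [f0]))"
        using Inr ss h h' N by auto
      have u1: "unr (s, u @ [f]) = (e0, h @ [f0])" "unr (s', v @ [f]) = (e0, h' @ [f0])" unfolding e1 by (rule unr_simp)+
      show ?thesis unfolding InvC_def InvE_def InvX_def using u1 pe2 Inr by auto
    next
      case (Inl c)
      have cu: "cross_path C E R c (fsrc E f0) (s,u)" using post(2) Inl f0 by (simp add: cross_path_def)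
      have cv: "cross_path C E R c (fsrc E f0) (s,v)" using pv Inl f0 by (simp add: cross_path_def)
      have eq: "Psi c (fsrc E f0) (s,u) = Psi c (fsrc E f0) (s,v)" using IH(3) post(2) Inl f0 unfolding InvX_def by auto
      have pc: "is_path C (c,[]) c" using R.cross_sorts[OF cu] by (simp add: is_path_def)
      have pw: "is_path E (fsrc E f0, [f0]) (ftgt E f0)" using f0 se by (simp add: is_path_def)
      have e1: "ext (c,[]) (s,u) (fsrc E f0, [f0]) = (s, u @ [f])" "ext (c,[]) (s,v) (fsrc E f0, [f0]) = (s', v @ [f])"
        using Inl N ss by (auto simp: ext_def)
      have pn: "is_path R.T (s, u @ [f]) (Inr (ftgt E f0))" using post(2) f0 N se by (simp add: is_path_def chain_snoc)
      have "Psi c (ftgt E f0) (s, u @ [f]) = Psi c (ftgt E f0) (s', v @ [f])"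
        using Psi_nat[OF cu pc pw] Psi_nat[OF cv pc pw] e1 eq by simp
      moreover have "\<not> is_path R.T (s, u @ [f]) (Inl c')" for c' using pn unfolding is_path_def
        by (metis chain_tgt_unique sum.distinct(1))
      moreover have "is_path R.T (s, u @ [f]) (Inr e') \<Longrightarrow> e' = ftgt E f0" for e' using pn unfolding is_path_def
        by (metis chain_tgt_unique sum.inject(2))
      ultimately show ?thesis unfolding InvC_def InvE_def InvX_def using Inl by auto
    qed
  qed
next
  case (pre s u s' v g)
  have ss: "s' = s" using R.prov_paths[OF pre(1)] by simp
  have IH: "InvC (s,u) (s,v)" "InvE (s,u) (s,v)" "InvX (s,u) (s,v)" using pre.IH ss by auto
  obtain t where pu: "is_path R.T (s,u) t" "is_path R.T (s,v) t" using R.prov_paths[OF pre(1)] ss by auto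
  consider (L) g0 where "g = Inl g0" | (M) i where "g = Inr (Inl i)" | (N) g0 where "g = Inr (Inr g0)"
    by (metis sum.exhaust)
  then show ?case
  proof cases
    case L
    have g0: "g0 \<in> Funs C" "s = Inl (ftgt C g0)" using pre(2,3) L by auto
    have fs: "fsrc C g0 \<in> Sorts C" using P.wfC g0(1) by (auto simp: catpres_wf_def)
    have "is_path R.T (Inl (ftgt C g0), u) t" using pu(1) g0(2) by simp
    from RT_L[OF this] show ?thesis
    proof
      assume "\<exists>c' x. t = Inl c' \<and> u = map Inl x \<and> is_chain C (ftgt C g0) x c'"
      then obtain c' x where x: "t = Inl c'" "u = map Inl x" "is_chain C (ftgt C g0) x c'" by blast
      obtain y where y: "v = map Inl y" "is_chain C (ftgt C g0) y c'" using RT_L[of "ftgt C g0" v t] pu(2) g0(2) x(1) by auto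
      have pc: "prov_eq C (ftgt C g0, x) (ftgt C g0, y)" using IH(1) pu(1) g0(2) x y unfolding InvC_def by auto
      have pc2: "prov_eq C (fsrc C g0, g0 # x) (fsrc C g0, g0 # y)" using prov_eq.pre[OF pc g0(1)] by simp
      have e1: "(fsrc R.T g, g # u) = (Inl (fsrc C g0), map Inl (g0 # x))" "(fsrc R.T g, g # v) = (Inl (fsrc C g0), map Inl (g0 # y))"
        using L x y by auto
      have u1: "unl (fsrc R.T g, g # u) = (fsrc C g0, g0 # x)" "unl (fsrc R.T g, g # v) = (fsrc C g0, g0 # y)"
        unfolding e1 by (rule unl_simp)+
      have nx: "\<not> is_path R.T (fsrc R.T g, g # u) (Inr e)" for e unfolding e1 is_path_def fst_conv snd_conv
        using chain_mapInl[of C E R "fsrc C g0" "g0 # x" "Inr e"] by auto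
      have fs1: "fst (fsrc R.T g, g # u) = Inl (fsrc C g0)" using e1 by simp
      show ?thesis unfolding InvC_def InvE_def InvX_def using u1 nx pc2 fs1 by auto
    next
      assume "\<exists>e. t = Inr e \<and> cross_path C E R (ftgt C g0) e (Inl (ftgt C g0), u)"
      then obtain e where e: "t = Inr e" "cross_path C E R (ftgt C g0) e (s, u)" using g0 by blast
      have cv: "cross_path C E R (ftgt C g0) e (s,v)" using pu(2) e(1) g0 by (simp add: cross_path_def)
      have eq: "Psi (ftgt C g0) e (s,u) = Psi (ftgt C g0) e (s,v)" using IH(3) pu(1) e g0 unfolding InvX_def by auto
      have pc: "is_path C (fsrc C g0, [g0]) (ftgt C g0)" using g0 fs P.wfC by (auto simp: is_path_def catpres_wf_def)
      have pw: "is_path E (e, []) e" using R.cross_sorts[OF e(2)] by (simp add: is_path_def)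
      have e1: "ext (fsrc C g0, [g0]) (s,u) (e, []) = (fsrc R.T g, g # u)" "ext (fsrc C g0, [g0]) (s,v) (e, []) = (fsrc R.T g, g # v)"
        using L by (auto simp: ext_def)
      have pn: "is_path R.T (fsrc R.T g, g # u) (Inr e)" using pu(1) e(1) g0 L fs by (simp add: is_path_def)
      have "Psi (fsrc C g0) e (fsrc R.T g, g # u) = Psi (fsrc C g0) e (fsrc R.T g, g # v)"
        using Psi_nat[OF e(2) pc pw] Psi_nat[OF cv pc pw] e1 eq by simp
      moreover have "\<not> is_path R.T (fsrc R.T g, g # u) (Inl c')" for c' using pn unfolding is_path_def
        by (metis chain_tgt_unique sum.distinct(1))
      moreover have "is_path R.T (fsrc R.T g, g # u) (Inr e') \<Longrightarrow> e' = e" for e' using pn unfolding is_path_def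
        by (metis chain_tgt_unique sum.inject(2))
      ultimately show ?thesis unfolding InvC_def InvE_def InvX_def using L by auto
    qed
  next
    case M
    have i: "i < length L" "s = Inr (ptgt R i)" using pre(2,3) M by auto
    obtain p q where pq: "L ! i = (p,q)" by fastforce
    have S: "p \<in> PFuns P" "q \<in> PFuns Q" "ptgt P p = psrc Q q" using nth_S[OF i(1)] pq by (auto simp: Sset_def)
    obtain h e' where h: "t = Inr e'" "u = map (Inr \<circ> Inr) h" "is_chain E (ptgt Q q) h e'"
      using RT_R[of "ptgt R i" u t] pu(1) i pq by auto
    obtain h' where h': "v = map (Inr \<circ> Inr) h'" "is_chain E (ptgt Q q) h' e'"
      using RT_R[of "ptgt R i" v t] pu(2) i pq h(1) by auto
    have pe: "prov_eq E (ptgt Q q, h) (ptgt Q q, h')" using IH(2) pu(1) i pq h h' unfolding InvE_def by auto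
    have pQ: "prov_eq Q.T (Inr (ptgt Q q), map (Inr \<circ> Inr) h) (Inr (ptgt Q q), map (Inr \<circ> Inr) h')"
      using prov_emb_r[OF pe] by (simp add: emb_r_def)
    have pQ2: "prov_eq Q.T (Inl (ptgt P p), Inr (Inl q) # map (Inr \<circ> Inr) h) (Inl (ptgt P p), Inr (Inl q) # map (Inr \<circ> Inr) h')"
      using prov_eq.pre[OF pQ, of "Inr (Inl q)"] S by simp
    have c: "psrc R i = psrc P p" using pq by simp
    have e1: "(fsrc R.T g, g # u) = (Inl (psrc P p), map Inl [] @ Inr (Inl i) # map (Inr \<circ> Inr) h)"
      "(fsrc R.T g, g # v) = (Inl (psrc P p), map Inl [] @ Inr (Inl i) # map (Inr \<circ> Inr) h')"
      using M h h' c by auto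
    have pn: "is_path R.T (fsrc R.T g, g # u) (Inr e')" using pu(1) h(1) M i P.psrc_sort[OF S(1)] c by (simp add: is_path_def)
    have "Psi c0 e0 (fsrc R.T g, g # u) = Psi c0 e0 (fsrc R.T g, g # v)" for c0 e0
      unfolding e1 Psi_def zPsi_simp[OF pq] using Q.elt_eq[OF pQ2] by simp
    moreover have "\<not> is_path R.T (fsrc R.T g, g # u) (Inl c')" for c' using pn unfolding is_path_def
      by (metis chain_tgt_unique sum.distinct(1))
    moreover have "fst (fsrc R.T g, g # u) = Inl (psrc P p)" using e1 by simp
    ultimately show ?thesis unfolding InvC_def InvE_def InvX_def by auto
  next
    case N
    have g0: "g0 \<in> Funs E" "s = Inr (ftgt E g0)" using pre(2,3) N by auto
    obtain h e' where h: "t = Inr e'" "u = map (Inr \<circ> Inr) h" "is_chain E (ftgt E g0) h e'"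
      using RT_R[of "ftgt E g0" u t] pu(1) g0 by auto
    obtain h' where h': "v = map (Inr \<circ> Inr) h'" "is_chain E (ftgt E g0) h' e'"
      using RT_R[of "ftgt E g0" v t] pu(2) g0 h(1) by auto
    have pe: "prov_eq E (ftgt E g0, h) (ftgt E g0, h')" using IH(2) pu(1) g0 h h' unfolding InvE_def by auto
    have pe2: "prov_eq E (fsrc E g0, g0 # h) (fsrc E g0, g0 # h')" using prov_eq.pre[OF pe g0(1)] by simp
    have e1: "(fsrc R.T g, g # u) = (Inr (fsrc E g0), map (Inr \<circ> Inr) (g0 # h))"
      "(fsrc R.T g, g # v) = (Inr (fsrc E g0), map (Inr \<circ> Inr) (g0 # h'))"
      using N h h' by auto
    have u1: "unr (fsrc R.T g, g # u) = (fsrc E g0, g0 # h)" "unr (fsrc R.T g, g # v) = (fsrc E g0, g0 # h')"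
      unfolding e1 by (rule unr_simp)+
    have fs1: "fst (fsrc R.T g, g # u) = Inr (fsrc E g0)" using e1 by simp
    show ?thesis unfolding InvC_def InvE_def InvX_def using u1 pe2 fs1 by auto
  qed
qed


definition xi where "xi c e z = th c (P.rep c (fst z) (fst (snd z))) (Q.rep (fst z) e (snd (snd z)))"

lemma xi_car: "z \<in> car c e \<Longrightarrow> rcp C E R c (xi c e z) \<and> cross_path C E R c e (xi c e z)"
proof -
  assume "z \<in> car c e"
  then obtain d a b where z: "z = (d,a,b)" "a \<in> el PP c d" "b \<in> el QQ d e" by (auto simp: comp_carrier_def)
  show ?thesis using th_lemma[OF conjunct1[OF P.rep_prop[OF z(2)]] conjunct1[OF Q.rep_prop[OF z(3)]]] z(1)
    by (simp add: xi_def)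
qed

lemma Psi_xi: "z \<in> car c e \<Longrightarrow> Psi c e (xi c e z) = crel c e `` {z}"
proof -
  assume "z \<in> car c e"
  then obtain d a b where z: "z = (d,a,b)" "a \<in> el PP c d" "b \<in> el QQ d e" by (auto simp: comp_carrier_def)
  show ?thesis using Psi_th[OF conjunct1[OF P.rep_prop[OF z(2)]] conjunct1[OF Q.rep_prop[OF z(3)]]] z
      P.elt_rep[OF z(2)] Q.elt_rep[OF z(3)] by (simp add: xi_def)
qed

lemma xi_gen:
  assumes "(x,y) \<in> cgen c e"
  shows "inst_eq C E R c (xi c e x) (xi c e y)"
proof -
  obtain d d' g a b where xy: "x = (d, a, act QQ (d,g) (e,[]) b)" "y = (d', act PP (c,[]) (d,g) a, b)"
    "is_chain D d g d'" "a \<in> el PP c d" "b \<in> el QQ d' e"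
    using assms by (auto simp: comp_gen_def)
  have se: "e \<in> Sorts E" "c \<in> Sorts C" using prof_sorts[OF Q.prof xy(5)] prof_sorts[OF P.prof xy(4)] by auto
  let ?sa = "P.rep c d a" and ?tb = "Q.rep d' e b"
  have sa: "cross_path C D P c d ?sa" using P.rep_prop[OF xy(4)] by blast
  have tb: "cross_path D E Q d' e ?tb" using Q.rep_prop[OF xy(5)] by blast
  have pg: "is_path D (d,g) d'" using xy(3) by (simp add: is_path_def)
  have pe: "is_path E (e,[]) e" using se by (simp add: is_path_def)
  have pc: "is_path C (c,[]) c" using se by (simp add: is_path_def)
  have tb': "cross_path D E Q d' (fst (e,[])) ?tb" using tb by simp
  have b1: "Q.elt d e (ext (d,g) ?tb (e,[])) = act QQ (d,g) (e,[]) b"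
    using Q.elt_nat[OF pg pe tb'] Q.elt_rep[OF xy(5)] by simp
  have ce1: "cross_path D E Q d e (ext (d,g) ?tb (e,[]))" using Q.ext_cross[OF pg pe tb'] by simp
  have r1: "prov_eq Q.T (Q.rep d e (act QQ (d,g) (e,[]) b)) (ext (d,g) ?tb (e,[]))"
    using Q.rep_elt[OF ce1] b1 by simp
  have ca1: "cross_path D E Q d e (Q.rep d e (act QQ (d,g) (e,[]) b))"
    using Q.rep_prop[of "act QQ (d,g) (e,[]) b" d e] prof_act_in[OF Q.prof pg pe, of b] xy(5) by simp
  have i1: "inst_eq C E R c (xi c e x) (th c ?sa (ext (d,g) ?tb (e,[])))"
    using th_congQ[OF sa ca1 ce1 r1] xy(1) by (simp add: xi_def)
  have i2: "inst_eq C E R c (th c (appE ?sa g) ?tb) (th c ?sa (ext (d,g) ?tb (e,[])))"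
    using th_shift[OF sa xy(3) tb] by (simp add: ext_def)
  have sa': "cross_path C D P c (fst (d,g)) ?sa" using sa by simp
  have a1: "P.elt c d' (ext (c,[]) ?sa (d,g)) = act PP (c,[]) (d,g) a"
    using P.elt_nat[OF pc pg sa'] P.elt_rep[OF xy(4)] by simp
  have fsa: "fst ?sa = Inl c" using sa by (simp add: cross_path_def)
  have ex: "ext (c,[]) ?sa (d,g) = appE ?sa g" using fsa by (simp add: ext_def appE_def)
  have ce2: "cross_path C D P c d' (appE ?sa g)" using P.ext_cross[OF pc pg sa'] ex by simp
  have r2: "prov_eq P.T (P.rep c d' (act PP (c,[]) (d,g) a)) (appE ?sa g)"
    using P.rep_elt[OF ce2] a1 ex by simp
  have ca2: "cross_path C D P c d' (P.rep c d' (act PP (c,[]) (d,g) a))"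
    using P.rep_prop[of "act PP (c,[]) (d,g) a" c d'] prof_act_in[OF P.prof pc pg, of a] xy(4) by simp
  have i3: "inst_eq C E R c (xi c e y) (th c (appE ?sa g) ?tb)"
    using th_congP[OF ca2 ce2 r2 tb] xy(2) by (simp add: xi_def)
  show ?thesis using i1 i2 i3 by (meson inst_eq.sym inst_eq.trans)
qed

lemma gen_car: "(x,y) \<in> cgen c e \<Longrightarrow> x \<in> car c e \<and> y \<in> car c e"
proof -
  assume "(x,y) \<in> cgen c e"
  then obtain d d' g a b where xy: "x = (d, a, act QQ (d,g) (e,[]) b)" "y = (d', act PP (c,[]) (d,g) a, b)"
    "is_chain D d g d'" "a \<in> el PP c d" "b \<in> el QQ d' e"
    by (auto simp: comp_gen_def)
  have se: "e \<in> Sorts E" "c \<in> Sorts C" using prof_sorts[OF Q.prof xy(5)] prof_sorts[OF P.prof xy(4)] by auto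
  have pg: "is_path D (d,g) d'" using xy(3) by (simp add: is_path_def)
  have pe: "is_path E (e,[]) e" using se by (simp add: is_path_def)
  have pc: "is_path C (c,[]) c" using se by (simp add: is_path_def)
  have "act QQ (d,g) (e,[]) b \<in> el QQ d e" using prof_act_in[OF Q.prof pg pe, of b] xy(5) by simp
  moreover have "act PP (c,[]) (d,g) a \<in> el PP c d'" using prof_act_in[OF P.prof pc pg, of a] xy(4) by simp
  moreover have "d \<in> Sorts D" "d' \<in> Sorts D" using xy(3) by (auto dest: chain_src chain_tgt_sort)
  ultimately show ?thesis using xy by (auto simp: comp_carrier_def)
qed

lemma xi_crel:
  assumes "(z,z') \<in> crel c e" "z \<in> car c e"
  shows "inst_eq C E R c (xi c e z) (xi c e z') \<and> z' \<in> car c e"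
  using assms(1) unfolding comp_rel_def
proof (induction rule: rtrancl_induct)
  case base then show ?case using xi_car[OF assms(2)] assms(2) by (blast intro: inst_eq.refl)
next
  case (step y y')
  from step(2) consider "y = y'" | "(y,y') \<in> cgen c e" | "(y',y) \<in> cgen c e" by auto
  then show ?case
  proof cases
    case 1 then show ?thesis using step(3) by simp
  next
    case 2 then show ?thesis using step(3) xi_gen gen_car by (blast intro: inst_eq.trans)
  next
    case 3 then show ?thesis using step(3) xi_gen gen_car by (blast intro: inst_eq.trans inst_eq.sym)
  qed
qed

lemma xi_zPsi:
  assumes t: "rcp C E R c t" "is_path R.T t (Inr e)"
  shows "inst_eq C E R c (xi c e (zPsi c e t)) t"
proof -
  obtain i h e0 where ti: "t = (Inl c, Inr (Inl i) # map (Inr \<circ> Inr) h)" "i \<in> PFuns R" "psrc R i = c"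
    "is_chain E (ptgt R i) h e0" using t(1) by (auto simp: rcp_def)
  obtain p q where pq: "L ! i = (p,q)" by fastforce
  have il: "i < length L" using ti(2) by simp
  have S: "p \<in> PFuns P" "q \<in> PFuns Q" "ptgt P p = psrc Q q" using nth_S[OF il] pq by (auto simp: Sset_def)
  have ch: "is_chain E (ptgt Q q) h e" using t(2) ti pq R.rcp_path_iff[OF t(1)] by simp
  have cp: "psrc P p = c" using ti(3) pq by simp
  let ?d = "ptgt P p"
  let ?sp = "(Inl c, [Inr (Inl p)]) :: ('sc+'sd,'fc+'fp+'fd) path"
  let ?tq = "(Inl ?d, Inr (Inl q) # map (Inr \<circ> Inr) h) :: ('sd+'se,'fd+'fq+'fe) path"
  have z: "zPsi c e t = (?d, P.elt c ?d ?sp, Q.elt ?d e ?tq)"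
    using zPsi_simp[OF pq, of c e "Inl c" "[]" h] ti(1) by simp
  have sp: "cross_path C D P c ?d ?sp" using sp_cross[of c "[]" p] S cp P.psrc_sort by auto
  have tq: "cross_path D E Q ?d e ?tq" using tq_cross[OF ch S(2)] S(3) by simp
  have i1: "inst_eq C E R c (xi c e (zPsi c e t)) (th c ?sp (Q.rep ?d e (Q.elt ?d e ?tq)))"
    unfolding z xi_def fst_conv snd_conv
    using th_congP[OF conjunct1[OF P.rep_prop[OF conjunct1[OF P.elt_in[OF sp]]]] sp P.rep_elt[OF sp]
        conjunct1[OF Q.rep_prop[OF conjunct1[OF Q.elt_in[OF tq]]]]] .
  have i2: "inst_eq C E R c (th c ?sp (Q.rep ?d e (Q.elt ?d e ?tq))) (th c ?sp ?tq)"
    using th_congQ[OF sp conjunct1[OF Q.rep_prop[OF conjunct1[OF Q.elt_in[OF tq]]]] tq Q.rep_elt[OF tq]] .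
  have "rcp C D P c (Inl c, Inr (Inl p) # map (Inr \<circ> Inr) [])"
    by (rule rcp_mk[where d="?d"]) (use S cp P.ptgt_sort Q.psrc_sort in auto)
  then have rsp: "rcp C D P c ?sp" by simp
  note n = NFP[OF sp]
  have "inst_eq C D P c (NFP c ?sp) ?sp" using n rsp P.conserv prov_eq.sym by blast
  moreover have "is_path P.T (NFP c ?sp) (Inr ?d)" using P.prov_same_tgt[of ?sp _ "Inr ?d"] n sp
    by (auto simp: cross_path_def)
  ultimately have i3: "inst_eq C E R c (th c ?sp ?tq) (th1 ?sp ?tq)" using L1 tq by (simp add: th_def)
  have rtq: "rcp D E Q ?d ?tq" by (rule rcp_mk[where d=e]) (use S ch in auto)
  note n2 = NFQ[OF tq]
  have "inst_eq D E Q ?d (NFQ ?d ?tq) ?tq" using n2 rtq Q.conserv prov_eq.sym by blast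
  from L2[OF this S(1) HOL.refl] have "inst_eq C E R (psrc P p) (mk p (NFQ ?d ?tq)) (mk p ?tq)" .
  moreover have "th1 ?sp ?tq = mk p (NFQ ?d ?tq)" by (simp add: th1_def rtail_def preQ_def)
  moreover have "mk p ?tq = t" using ti(1) pq idx_nth[OF il] cp by (simp add: mk_def)
  ultimately have i4: "inst_eq C E R c (th1 ?sp ?tq) t" using cp by simp
  show ?thesis using i1 i2 i3 i4 by (meson inst_eq.trans)
qed

lemma Psi_inj:
  assumes t: "rcp C E R c t" "is_path R.T t (Inr e)" and t': "rcp C E R c t'" "is_path R.T t' (Inr e)"
    and eq: "Psi c e t = Psi c e t'"
  shows "inst_eq C E R c t t'"
proof -
  have ct: "cross_path C E R c e t" using t R.rcp_cross by blast
  have "(zPsi c e t, zPsi c e t') \<in> crel c e" using eq class_eqD by (simp add: Psi_def)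
  from xi_crel[OF this zPsi_car[OF ct]]
  have "inst_eq C E R c (xi c e (zPsi c e t)) (xi c e (zPsi c e t'))" by blast
  then show ?thesis using xi_zPsi[OF t] xi_zPsi[OF t'] by (meson inst_eq.sym inst_eq.trans)
qed

lemma E3I: "f \<in> Funs C \<Longrightarrow> i < length L \<Longrightarrow> ftgt C f = psrc P (fst (L ! i)) \<Longrightarrow>
   ((Inl (fsrc C f), [Inl f, Inr (Inl i)]),
    th1 (NFP (fsrc C f) (Inl (fsrc C f), [Inl f, Inr (Inl (fst (L ! i)))])) (qpath (snd (L ! i)))) \<in> E3"
  unfolding E3_def by (rule image_eqI[where x="(f,i)"]) auto

lemma R_nongen: "nongenerative C E R"
  unfolding nongenerative_def
proof (intro ballI impI)
  fix f i assume f: "f \<in> Funs C" and i: "i \<in> PFuns R" and ft: "ftgt C f = psrc R i"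
  obtain p q where pq: "L ! i = (p,q)" by fastforce
  have il: "i < length L" using i by simp
  have S: "p \<in> PFuns P" "q \<in> PFuns Q" "ptgt P p = psrc Q q" using nth_S[OF il] pq by (auto simp: Sset_def)
  have fs: "fsrc C f \<in> Sorts C" "ftgt C f \<in> Sorts C" using P.wfC f by (auto simp: catpres_wf_def)
  let ?c = "fsrc C f"
  let ?s = "(Inl ?c, [Inl f, Inr (Inl p)]) :: ('sc+'sd,'fc+'fp+'fd) path"
  have s: "cross_path C D P ?c (ptgt P p) ?s" using sp_cross[of ?c "[f]" p] f ft pq S fs by simp
  have qc: "cross_path D E Q (ptgt P p) (ptgt Q q) (qpath q)" using qpath_cross[OF S(2)] S(3) by simp
  let ?t = "th1 (NFP ?c ?s) (qpath q)"
  have "rcp C E R ?c ?t" using th_lemma[OF s qc] by (simp add: th_def)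
  moreover have "prov_eq R.T (Inl ?c, [Inl f, Inr (Inl i)]) ?t"
  proof (rule prov_eq.ax)
    have "((Inl ?c, [Inl f, Inr (Inl i)]), ?t) \<in> E3" using E3I[OF f il] ft pq by simp
    then show "((Inl ?c, [Inl f, Inr (Inl i)]), ?t) \<in> Eqs R.T" unfolding total_def catpres.select_convs R_simps by blast
  qed
  ultimately show "\<exists>t. rcp C E R ?c t \<and> prov_eq R.T (Inl ?c, [Inl f, Inr (Inl i)]) t" by blast
qed

lemma R_cross_rcp: "cross_path C E R c e s \<Longrightarrow> \<exists>r. rcp C E R c r \<and> prov_eq R.T s r"
proof -
  assume a: "cross_path C E R c e s"
  then obtain x i h where "s = (Inl c, map Inl x @ Inr (Inl i) # map (Inr \<circ> Inr) h)"
    "is_chain C c x (psrc R i)" "i \<in> PFuns R" "is_chain E (ptgt R i) h e"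
    by (cases s) (auto simp: cross_path_def is_path_def chain_total_X)
  then show ?thesis using R.nongen_rcp[OF R_nongen] by auto
qed

lemma R_cons: "conservative C E R"
  unfolding conservative_def
proof (intro allI impI)
  fix c t t' assume a: "rcp C E R c t \<and> rcp C E R c t' \<and> prov_eq R.T t t'"
  then obtain e where e: "is_path R.T t (Inr e)" "fst t = Inl c" using R.rcp_path by blast
  have e': "is_path R.T t' (Inr e)" using R.prov_same_tgt a e by blast
  have "Psi c e t = Psi c e t'" using Psi_inv a e unfolding InvX_def by blast
  then show "inst_eq C E R c t t'" using Psi_inj a e e' by blast
qed

lemma R_curryable: "curryable C E R" using R_nongen R_cons by (simp add: curryable_def)


definition phi_iso where "phi_iso c e X = R.cls (xi c e (SOME z. z \<in> X))"

lemma el_comp_rep: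
  assumes "X \<in> el (prof_comp C D E PP QQ) c e"
  shows "(SOME z. z \<in> X) \<in> car c e \<and> X = crel c e `` {SOME z. z \<in> X}"
proof -
  obtain z0 where z0: "z0 \<in> car c e" "X = crel c e `` {z0}" using assms el_comp by auto
  have "z0 \<in> X" using z0 crel_refl by auto
  then have zX: "(SOME z. z \<in> X) \<in> X" by (rule someI)
  then have r: "(z0, SOME z. z \<in> X) \<in> crel c e" using z0 by auto
  then have "(SOME z. z \<in> X) \<in> car c e" using xi_crel[OF r z0(1)] by blast
  moreover have "X = crel c e `` {SOME z. z \<in> X}" by (rule HOL.trans[OF z0(2) crel_class[OF r]])
  ultimately show ?thesis by blast
qed

lemma Psi_eq_prov: "prov_eq R.T a b \<Longrightarrow> cross_path C E R c e a \<Longrightarrow> Psi c e a = Psi c e b"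
  using Psi_inv unfolding InvX_def cross_path_def by blast

lemma Psi_eq_inj: "cross_path C E R c e a \<Longrightarrow> cross_path C E R c e b \<Longrightarrow> Psi c e a = Psi c e b \<Longrightarrow>
   prov_eq R.T a b"
proof -
  assume a: "cross_path C E R c e a" "cross_path C E R c e b" "Psi c e a = Psi c e b"
  obtain a0 where a0: "rcp C E R c a0" "prov_eq R.T a a0" using R_cross_rcp[OF a(1)] by blast
  obtain b0 where b0: "rcp C E R c b0" "prov_eq R.T b b0" using R_cross_rcp[OF a(2)] by blast
  have pa: "is_path R.T a0 (Inr e)" using R.prov_same_tgt a0 a(1) by (auto simp: cross_path_def)
  have pb: "is_path R.T b0 (Inr e)" using R.prov_same_tgt b0 a(2) by (auto simp: cross_path_def)
  have "Psi c e a0 = Psi c e b0" using Psi_eq_prov[OF a0(2) a(1)] Psi_eq_prov[OF b0(2) a(2)] a(3) by simp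
  from Psi_inj[OF a0(1) pa b0(1) pb this] have "prov_eq R.T a0 b0" by (rule R.inst_sound)
  then show ?thesis using a0 b0 by (meson prov_eq.sym prov_eq.trans)
qed

lemma main_iso: "prof_iso C E (prof_comp C D E PP QQ) (pres_prof C E R)"
  unfolding prof_iso_def
proof (intro exI[of _ phi_iso] conjI ballI allI impI)
  fix c e assume ce: "c \<in> Sorts C" "e \<in> Sorts E"
  show "bij_betw (phi_iso c e) (el (prof_comp C D E PP QQ) c e) (el (pres_prof C E R) c e)"
    unfolding bij_betw_def
  proof (intro conjI)
    show "inj_on (phi_iso c e) (el (prof_comp C D E PP QQ) c e)"
    proof (rule inj_onI)
      fix X Y assume X: "X \<in> el (prof_comp C D E PP QQ) c e" and Y: "Y \<in> el (prof_comp C D E PP QQ) c e"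
        and eq: "phi_iso c e X = phi_iso c e Y"
      note rx = el_comp_rep[OF X] and ry = el_comp_rep[OF Y]
      have cx: "cross_path C E R c e (xi c e (SOME z. z \<in> X))" using xi_car rx by blast
      have "prov_eq R.T (xi c e (SOME z. z \<in> X)) (xi c e (SOME z. z \<in> Y))"
        using R.cls_eqD[OF cx] eq by (simp add: phi_iso_def)
      then have "Psi c e (xi c e (SOME z. z \<in> X)) = Psi c e (xi c e (SOME z. z \<in> Y))"
        using Psi_eq_prov cx by blast
      then show "X = Y" using Psi_xi rx ry by simp
    qed
    show "phi_iso c e ` el (prof_comp C D E PP QQ) c e = el (pres_prof C E R) c e"
    proof
      show "phi_iso c e ` el (prof_comp C D E PP QQ) c e \<subseteq> el (pres_prof C E R) c e"
      proof
        fix Y assume "Y \<in> phi_iso c e ` el (prof_comp C D E PP QQ) c e"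
        then obtain X where X: "X \<in> el (prof_comp C D E PP QQ) c e" "Y = phi_iso c e X" by auto
        have "cross_path C E R c e (xi c e (SOME z. z \<in> X))" using xi_car el_comp_rep[OF X(1)] by blast
        then show "Y \<in> el (pres_prof C E R) c e" using X(2) R.pres_el by (auto simp: phi_iso_def)
      qed
      show "el (pres_prof C E R) c e \<subseteq> phi_iso c e ` el (prof_comp C D E PP QQ) c e"
      proof
        fix Y assume "Y \<in> el (pres_prof C E R) c e"
        then obtain t where t: "cross_path C E R c e t" "Y = R.cls t" using R.pres_el by auto
        obtain t0 where t0: "rcp C E R c t0" "prov_eq R.T t t0" using R_cross_rcp[OF t(1)] by blast
        have ct0: "cross_path C E R c e t0" using R.prov_same_tgt t0 t(1) R.rcp_path[OF t0(1)] by (auto simp: cross_path_def)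
        let ?X = "crel c e `` {zPsi c e t0}"
        have X: "?X \<in> el (prof_comp C D E PP QQ) c e" using el_comp zPsi_car[OF ct0] by auto
        note rx = el_comp_rep[OF X]
        have "(zPsi c e t0, SOME z. z \<in> ?X) \<in> crel c e"
          using rx crel_refl by (metis Image_singleton_iff someI)
        from xi_crel[OF this zPsi_car[OF ct0]]
        have i1: "inst_eq C E R c (xi c e (zPsi c e t0)) (xi c e (SOME z. z \<in> ?X))" by blast
        have i2: "inst_eq C E R c (xi c e (zPsi c e t0)) t0"
          using xi_zPsi[OF t0(1)] ct0 by (auto simp: cross_path_def)
        have "prov_eq R.T t (xi c e (SOME z. z \<in> ?X))"
          using R.inst_sound[OF i1] R.inst_sound[OF i2] t0(2) by (meson prov_eq.sym prov_eq.trans)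
        then have "phi_iso c e ?X = Y" using t(2) R.cls_eq by (simp add: phi_iso_def)
        then show "Y \<in> phi_iso c e ` el (prof_comp C D E PP QQ) c e" using X by blast
      qed
    qed
  qed
next
  fix u v c d' X
  assume a: "is_path C u c \<and> is_path E v d' \<and> X \<in> el (prof_comp C D E PP QQ) c (fst v)"
  then have u: "is_path C u c" and v: "is_path E v d'" and X: "X \<in> el (prof_comp C D E PP QQ) c (fst v)" by auto
  let ?e = "fst v"
  let ?z = "SOME z. z \<in> X"
  note rx = el_comp_rep[OF X]
  have cx: "cross_path C E R c ?e (xi c ?e ?z)" using xi_car rx by blast
  have act1: "act (prof_comp C D E PP QQ) u v X = crel (fst u) d' `` {img u v ?z}"
    using act_comp[OF conjunct1[OF rx] u v HOL.refl] rx by simp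
  have imc: "img u v ?z \<in> car (fst u) d'" using car_img[OF conjunct1[OF rx] u v HOL.refl] .
  let ?X' = "act (prof_comp C D E PP QQ) u v X"
  have X': "?X' \<in> el (prof_comp C D E PP QQ) (fst u) d'" using act1 imc el_comp by auto
  note rx' = el_comp_rep[OF X']
  let ?z' = "SOME z. z \<in> ?X'"
  have cx': "cross_path C E R (fst u) d' (xi (fst u) d' ?z')" using xi_car rx' by blast
  have ce: "cross_path C E R (fst u) d' (ext u (xi c ?e ?z) v)" using R.ext_cross[OF u v cx] .
  have "Psi (fst u) d' (ext u (xi c ?e ?z) v) = act (prof_comp C D E PP QQ) u v (Psi c ?e (xi c ?e ?z))"
    using Psi_nat[OF cx u v HOL.refl] .
  also have "\<dots> = ?X'" using Psi_xi rx by simp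
  also have "\<dots> = Psi (fst u) d' (xi (fst u) d' ?z')" using Psi_xi rx' by simp
  finally have "prov_eq R.T (xi (fst u) d' ?z') (ext u (xi c ?e ?z) v)"
    using Psi_eq_inj[OF cx' ce] by simp
  then have "phi_iso (fst u) d' ?X' = R.cls (ext u (xi c ?e ?z) v)" using R.cls_eq by (simp add: phi_iso_def)
  also have "\<dots> = act (pres_prof C E R) u v (phi_iso c ?e X)"
    using R.act_pres[OF u v cx] by (simp add: phi_iso_def)
  finally show "phi_iso (fst u) d' (act (prof_comp C D E PP QQ) u v X) = act (pres_prof C E R) u v (phi_iso c (fst v) X)" .
qed

end

theorem mainTheorem16:
  fixes C :: "('sc,'fc) catpres" and D :: "('sd,'fd) catpres" and E :: "('se,'fe) catpres"
    and P :: "('sc,'fc,'sd,'fd,'fp) profpres" and Q :: "('sd,'fd,'se,'fe,'fq) profpres"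
    and PP :: "('sc,'fc,'sd,'fd,'a) profunctor" and QQ :: "('sd,'fd,'se,'fe,'b) profunctor"
  assumes "catpres_wf C" "catpres_wf D" "catpres_wf E"
    and "finite_catpres C" "finite_catpres D" "finite_catpres E"
    and "profpres_wf C D P" "finite_profpres P" "curryable C D P"
    and "profpres_wf D E Q" "finite_profpres Q" "curryable D E Q"
    and "is_profunctor C D PP" "is_profunctor D E QQ"
    and "prof_iso C D PP (pres_prof C D P)" "prof_iso D E QQ (pres_prof D E Q)"
  shows "\<exists>R :: ('sc,'fc,'se,'fe,nat) profpres.
           profpres_wf C E R \<and> finite_profpres R \<and> curryable C E R \<and>
           prof_iso C E (prof_comp C D E PP QQ) (pres_prof C E R)"
proof -
  obtain phiP where phiP:
    "\<forall>c\<in>Sorts C. \<forall>d\<in>Sorts D. bij_betw (phiP c d) (el PP c d) (el (pres_prof C D P) c d)"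
    "\<forall>u v c d' x. is_path C u c \<and> is_path D v d' \<and> x \<in> el PP c (fst v)
        \<longrightarrow> phiP (fst u) d' (act PP u v x) = act (pres_prof C D P) u v (phiP c (fst v) x)"
    using assms(15) unfolding prof_iso_def by blast
  obtain phiQ where phiQ:
    "\<forall>c\<in>Sorts D. \<forall>d\<in>Sorts E. bij_betw (phiQ c d) (el QQ c d) (el (pres_prof D E Q) c d)"
    "\<forall>u v c d' x. is_path D u c \<and> is_path E v d' \<and> x \<in> el QQ c (fst v)
        \<longrightarrow> phiQ (fst u) d' (act QQ u v x) = act (pres_prof D E Q) u v (phiQ c (fst v) x)"
    using assms(16) unfolding prof_iso_def by blast
  interpret compo C D E P Q PP QQ phiP phiQ
    apply unfold_locales
    using assms phiP phiQ by auto
  show ?thesis using wfR finR R_curryable main_iso by blast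
qed

end
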